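(* Let $(S)\subset (L^2)\subset (S)^{\ast}$ be the Hida Gel'fand triple over white noise space, and let $\diamond$ and $\ast$ be the Wick product and the convolution on $(S)^{\ast}$, defined by $$\Phi\diamond\Psi:=\mathcal{S}^{-1}\big(\mathcal{S}\Phi\cdot\mathcal{S}\Psi\big),\qquad \Phi\ast\Psi:=\mathcal{T}^{-1}\big(\mathcal{T}\Phi\cdot\mathcal{T}\Psi\big),\qquad \Phi,\Psi\in(S)^{\ast},$$ where $\cdot$ denotes the pointwise product of functionals on $S_c(\mathbb{R})$. Then neither product has zero divisors in $(S)^{\ast}$: for all $\Phi,\Psi\in(S)^{\ast}$, if $\Phi\diamond\Psi=0$ then $\Phi=0$ or $\Psi=0$; and if $\Phi\ast\Psi=0$ then $\Phi=0$ or $\Psi=0$.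
   Context: Consider the Gel'fand triple $S(\mathbb{R})\subset L^2(\mathbb{R})\subset S'(\mathbb{R})$ (Schwartz test functions and tempered distributions) and the Gaussian measure $\mu$ on $S'(\mathbb{R})$ with characteristic functional $\int_{S'(\mathbb{R})} e^{i\langle x,f\rangle}\,d\mu(x)=e^{-\frac12\langle f,f\rangle}$, $f\in S(\mathbb{R})$. Put $(L^2):=L^2(S'(\mathbb{R}),\mu)$. Let $H=-\frac{d^2}{dt^2}+t^2+1$ (the harmonic oscillator Hamiltonian with spectrum $\{2k+2: k=0,1,2,\dots\}$) and $\Gamma(H)$ its second quantization acting on $(L^2)$ via the Wiener–Itô chaos decomposition. The space $(S)$ of white noise test functionals is the projective limit of the Hilbert spaces $(S_p)$, $p\ge 0$, obtained by completing $\{\varphi:\|\Gamma(H)^p\varphi\|_{(L^2)}<\infty\}$, and $(S)^{\ast}$ (Hida distributions) is its dual, with duality pairing $\langle\langle\cdot,\cdot\rangle\rangle$ extending the $(L^2)$ inner product (bilinearly). Let $S_c(\mathbb{R})$ be the complexification of $S(\mathbb{R})$. The $\mathcal{S}$-transform of $\Phi\in(S)^{\ast}$ is the functional $(\mathcal{S}\Phi)(\xi)=\langle\langle\Phi, :e^{\langle\cdot,\xi\rangle}:\rangle\rangle$, $\xi\in S_c(\mathbb{R})$, where $:e^{\langle x,\xi\rangle}:=\exp(\langle x,\xi\rangle-\frac12\langle\xi,\xi\rangle)$ (for $\phi\in(L^2)$ and real $\xi$ this equals $\int\phi(x+\xi)\,d\mu(x)$); the $\mathcal{T}$-transform is $(\mathcal{T}\Phi)(\xi)=\langle\langle\Phi,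 e^{i\langle\cdot,\xi\rangle}\rangle\rangle$ (for $\phi\in(L^2)$ this equals $\int\phi(x)e^{i\langle x,\xi\rangle}d\mu(x)$). Both transforms are injective on $(S)^{\ast}$. By the Potthoff–Streit characterization theorem, a functional $F$ on $S_c(\mathbb{R})$ is the $\mathcal{S}$-transform (respectively, the $\mathcal{T}$-transform) of some Hida distribution iff (i) for all $\xi,\eta\in S_c(\mathbb{R})$, $z\mapsto F(z\xi+\eta)$ is entire on $\mathbb{C}$, and (ii) there are constants $K,a,p\ge0$ with $|F(z\xi)|\le K e^{a|z|^2\|H^p\xi\|_2^2}$; such functionals (U-functionals) form an algebra under pointwise multiplication, so $\diamond$ and $\ast$ are well-defined commutative products on $(S)^{\ast}$. *)

theory Defs
  imports "HOL-Analysis.Analysis"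
begin

text \<open>
  Coordinate (Hermite / chaos) model of the Hida Gel'fand triple.
  e_0, e_1, ... are the Hermite functions, the eigenbasis of H with H e_k = (2k+2) e_k.
  A test function xi in S_c(R) is identified with its coefficient sequence
  (xi_k) = (<xi, e_k>), and S_c(R) is exactly the set of complex sequences with
  sum_k |xi_k|^2 (2k+2)^(2p) finite for every p.
  A Hida distribution Phi is identified with its coefficient family (c_alpha) in the
  chaos expansion Phi = sum_alpha c_alpha H_alpha, where alpha ranges over finitely
  supported multi-indices and H_alpha(x) = prod_k h_(alpha_k)(<x,e_k>) (Wick-ordered
  Hermite polynomials, ||H_alpha||^2 = alpha!, Gamma(H) H_alpha = lambda^alpha H_alpha).
\<close>

definition multi_indices :: "(nat \<Rightarrow> nat) set" where
  "multi_indices = {\<alpha>. finite {k. \<alpha> k \<noteq> 0}}"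

definition mi_fact :: "(nat \<Rightarrow> nat) \<Rightarrow> real" where
  "mi_fact \<alpha> = (\<Prod>k\<in>{k. \<alpha> k \<noteq> 0}. fact (\<alpha> k))"

text \<open>eigenvalue of Gamma(H) on H_alpha: prod_k (2k+2)^alpha_k\<close>
definition mi_weight :: "(nat \<Rightarrow> nat) \<Rightarrow> real" where
  "mi_weight \<alpha> = (\<Prod>k\<in>{k. \<alpha> k \<noteq> 0}. (2 * real k + 2) ^ \<alpha> k)"

definition Sc :: "(nat \<Rightarrow> complex) set" where
  "Sc = {\<xi>. \<forall>p::nat. summable (\<lambda>k. (norm (\<xi> k))\<^sup>2 * (2 * real k + 2) ^ (2 * p))}"

definition bil :: "(nat \<Rightarrow> complex) \<Rightarrow> (nat \<Rightarrow> complex) \<Rightarrow> complex" where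
  "bil \<xi> \<eta> = (\<Sum>k. \<xi> k * \<eta> k)"

text \<open>(S)^*: union over p of the spaces (S_{-p})\<close>
definition hida_dist :: "((nat \<Rightarrow> nat) \<Rightarrow> complex) \<Rightarrow> bool" where
  "hida_dist c \<longleftrightarrow> (\<forall>\<alpha>. \<alpha> \<notin> multi_indices \<longrightarrow> c \<alpha> = 0) \<and>
     (\<exists>p::nat. (\<lambda>\<alpha>. mi_fact \<alpha> * (norm (c \<alpha>))\<^sup>2 / mi_weight \<alpha> ^ (2 * p)) summable_on multi_indices)"

text \<open>duality pairing <<Phi, phi>> = sum_alpha alpha! c_alpha a_alpha (bilinear extension of the (L^2) inner product)\<close>
definition dual_pair :: "((nat \<Rightarrow> nat) \<Rightarrow> complex) \<Rightarrow> ((nat \<Rightarrow> nat) \<Rightarrow> complex) \<Rightarrow> complex" where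
  "dual_pair c a = (\<Sum>\<^sub>\<infinity>\<alpha>\<in>multi_indices. of_real (mi_fact \<alpha>) * c \<alpha> * a \<alpha>)"

text \<open>chaos coefficients of the Wick exponential :e^{<.,xi>}: = sum_alpha xi^alpha / alpha! H_alpha\<close>
definition wick_exp :: "(nat \<Rightarrow> complex) \<Rightarrow> (nat \<Rightarrow> nat) \<Rightarrow> complex" where
  "wick_exp \<xi> \<alpha> = (\<Prod>k\<in>{k. \<alpha> k \<noteq> 0}. \<xi> k ^ \<alpha> k) / of_real (mi_fact \<alpha>)"

text \<open>chaos coefficients of e^{i<.,xi>} = e^{-<xi,xi>/2} :e^{<., i xi>}:\<close>
definition char_exp :: "(nat \<Rightarrow> complex) \<Rightarrow> (nat \<Rightarrow> nat) \<Rightarrow> complex" where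
  "char_exp \<xi> \<alpha> = exp (- bil \<xi> \<xi> / 2) * wick_exp (\<lambda>k. \<i> * \<xi> k) \<alpha>"

definition S_transform :: "((nat \<Rightarrow> nat) \<Rightarrow> complex) \<Rightarrow> (nat \<Rightarrow> complex) \<Rightarrow> complex" where
  "S_transform c \<xi> = dual_pair c (wick_exp \<xi>)"

definition T_transform :: "((nat \<Rightarrow> nat) \<Rightarrow> complex) \<Rightarrow> (nat \<Rightarrow> complex) \<Rightarrow> complex" where
  "T_transform c \<xi> = dual_pair c (char_exp \<xi>)"

definition wick :: "((nat \<Rightarrow> nat) \<Rightarrow> complex) \<Rightarrow> ((nat \<Rightarrow> nat) \<Rightarrow> complex) \<Rightarrow> ((nat \<Rightarrow> nat) \<Rightarrow> complex)" where
  "wick c d = (THE e. hida_dist e \<and> (\<forall>\<xi>\<in>Sc. S_transform e \<xi> = S_transform c \<xi> * S_transform d \<xi>))"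

definition conv :: "((nat \<Rightarrow> nat) \<Rightarrow> complex) \<Rightarrow> ((nat \<Rightarrow> nat) \<Rightarrow> complex) \<Rightarrow> ((nat \<Rightarrow> nat) \<Rightarrow> complex)" where
  "conv c d = (THE e. hida_dist e \<and> (\<forall>\<xi>\<in>Sc. T_transform e \<xi> = T_transform c \<xi> * T_transform d \<xi>))"

end

theory Submission imports Defs "HOL-Complex_Analysis.Complex_Analysis" begin


definition MIx :: "nat \<Rightarrow> (nat \<Rightarrow> nat) set" where
  "MIx N = {\<alpha>. \<forall>k\<ge>N. \<alpha> k = 0}"

definition mpow :: "(nat \<Rightarrow> 'a::comm_monoid_mult) \<Rightarrow> (nat \<Rightarrow> nat) \<Rightarrow> 'a" where
  "mpow \<xi> \<alpha> = (\<Prod>k\<in>{k. \<alpha> k \<noteq> 0}. \<xi> k ^ \<alpha> k)"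

lemma MIx_sub: "\<alpha> \<in> MIx N \<Longrightarrow> {k. \<alpha> k \<noteq> 0} \<subseteq> {..<N}"
  unfolding MIx_def by (auto simp: not_less[symmetric])

lemma MIx_MI: "MIx N \<subseteq> multi_indices"
  unfolding multi_indices_def using MIx_sub finite_subset by blast

lemma MIx_mono: "N \<le> M \<Longrightarrow> MIx N \<subseteq> MIx M"
  unfolding MIx_def by auto

lemma MI_MIx: assumes "\<alpha> \<in> multi_indices" shows "\<exists>N. \<alpha> \<in> MIx N"
proof -
  from assms have "finite {k. \<alpha> k \<noteq> 0}" by (simp add: multi_indices_def)
  then obtain N where "\<forall>k\<in>{k. \<alpha> k \<noteq> 0}. k < N" using finite_nat_bounded by blast
  then have "\<alpha> \<in> MIx N" unfolding MIx_def using not_less by auto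
  then show ?thesis by blast
qed

lemma finite_MIx: assumes "finite F" "F \<subseteq> multi_indices" shows "\<exists>N. F \<subseteq> MIx N"
  using assms
proof (induction F rule: finite_induct)
  case empty then show ?case by auto
next
  case (insert x F)
  then obtain N where N: "F \<subseteq> MIx N" by auto
  obtain M where M: "x \<in> MIx M" using insert.prems MI_MIx by (meson insert_subset)
  have "F \<subseteq> MIx (max N M)" using N MIx_mono[of N "max N M"] by auto
  moreover have "x \<in> MIx (max N M)" using M MIx_mono[of M "max N M"] by auto
  ultimately show ?case by auto
qed

lemma prod_supp_MIx:
  assumes "\<alpha> \<in> MIx N" "\<And>k. h k 0 = 1"
  shows "(\<Prod>k\<in>{k. \<alpha> k \<noteq> 0}. h k (\<alpha> k)) = (\<Prod>k<N. h k (\<alpha> k))"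
  by (rule prod.mono_neutral_left) (use assms MIx_sub in auto)

lemma MIx_bij: "bij_betw (\<lambda>\<alpha>. restrict \<alpha> {..<N}) (MIx N) (PiE {..<N} (\<lambda>_. UNIV))"
proof (rule bij_betw_byWitness[where f' = "\<lambda>g k. if k < N then g k else 0"])
  show "\<forall>a\<in>MIx N. (\<lambda>k. if k < N then restrict a {..<N} k else 0) = a"
    by (auto simp: MIx_def fun_eq_iff)
  show "\<forall>a'\<in>PiE {..<N} (\<lambda>_. UNIV). restrict (\<lambda>k. if k < N then a' k else 0) {..<N} = a'"
    by (auto simp: fun_eq_iff PiE_def extensional_def)
  show "(\<lambda>\<alpha>. restrict \<alpha> {..<N}) ` MIx N \<subseteq> PiE {..<N} (\<lambda>_. UNIV)" by (intro image_subsetI) (simp add: restrict_PiE_iff)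
  show "(\<lambda>g k. if k < N then g k else 0) ` PiE {..<N} (\<lambda>_. UNIV) \<subseteq> MIx N"
    unfolding MIx_def by (intro image_subsetI) simp
qed

lemma infsum_MIx_PiE:
  "infsum (\<lambda>\<alpha>. \<Prod>k<N. f k (\<alpha> k)) (MIx N) = infsum (\<lambda>g. \<Prod>k<N. f k (g k)) (PiE {..<N} (\<lambda>_. UNIV))"
proof -
  have "infsum (\<lambda>\<alpha>. (\<lambda>g. \<Prod>k<N. f k (g k)) (restrict \<alpha> {..<N})) (MIx N)
     = infsum (\<lambda>g. \<Prod>k<N. f k (g k)) (PiE {..<N} (\<lambda>_. UNIV))"
    by (rule infsum_reindex_bij_betw[OF MIx_bij])
  moreover have "(\<lambda>\<alpha>. (\<lambda>g. \<Prod>k<N. f k (g k)) (restrict \<alpha> {..<N})) = (\<lambda>\<alpha>. \<Prod>k<N. f k (\<alpha> k))"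
    by (auto intro!: prod.cong)
  ultimately show ?thesis by simp
qed

lemma summable_MIx_PiE:
  "(\<lambda>\<alpha>. \<Prod>k<N. f k (\<alpha> k)) summable_on (MIx N) \<longleftrightarrow> (\<lambda>g. \<Prod>k<N. f k (g k)) summable_on (PiE {..<N} (\<lambda>_. UNIV))"
proof -
  have "(\<lambda>\<alpha>. (\<lambda>g. \<Prod>k<N. f k (g k)) (restrict \<alpha> {..<N})) summable_on (MIx N)
     \<longleftrightarrow> (\<lambda>g. \<Prod>k<N. f k (g k)) summable_on (PiE {..<N} (\<lambda>_. UNIV))"
    by (rule summable_on_reindex_bij_betw[OF MIx_bij])
  moreover have "(\<lambda>\<alpha>. (\<lambda>g. \<Prod>k<N. f k (g k)) (restrict \<alpha> {..<N})) = (\<lambda>\<alpha>. \<Prod>k<N. f k (\<alpha> k))"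
    by (auto intro!: prod.cong)
  ultimately show ?thesis by simp
qed

lemma prod_infsum_MIx:
  fixes f :: "nat \<Rightarrow> nat \<Rightarrow> 'c::{banach, real_normed_div_algebra, comm_semiring_1}"
  assumes "\<And>k. (\<lambda>j. norm (f k j)) summable_on UNIV"
  shows "infsum (\<lambda>\<alpha>. \<Prod>k<N. f k (\<alpha> k)) (MIx N) = (\<Prod>k<N. infsum (f k) UNIV)"
  unfolding infsum_MIx_PiE by (rule infsum_prod_PiE_abs) (use assms in auto)

lemma prod_abs_summable_MIx:
  fixes f :: "nat \<Rightarrow> nat \<Rightarrow> 'c::{banach, real_normed_div_algebra, comm_semiring_1}"
  assumes "\<And>k. (\<lambda>j. norm (f k j)) summable_on UNIV"
  shows "(\<lambda>\<alpha>. norm (\<Prod>k<N. f k (\<alpha> k))) summable_on (MIx N)"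
proof -
  define g where "g k j = norm (f k j) + (if j = 0 then 1 else 0::real)" for k j
  have gsum: "(\<lambda>j. g k j) summable_on UNIV" for k
  proof -
    have "(\<lambda>j. norm (f k j)) summable_on UNIV" using assms by auto
    moreover have "(\<lambda>j. if j = 0 then 1 else 0::real) summable_on UNIV"
      by (rule finite_nonzero_values_imp_summable_on) auto
    ultimately show ?thesis unfolding g_def by (rule summable_on_add)
  qed
  have gnorm: "(\<lambda>j. norm (g k j)) = (\<lambda>j. g k j)" for k by (auto simp: g_def fun_eq_iff)
  have gs: "(\<lambda>j. norm (g k j)) summable_on UNIV" for k using gsum gnorm by metis
  have g1: "infsum (g k) UNIV \<ge> 1" for k
  proof -
    have "sum (g k) {0} \<le> infsum (g k) UNIV"
      apply (rule finite_sum_le_infsum[OF gsum])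
      apply simp apply simp apply (simp add: g_def)
      done
    then have "norm (f k 0) + 1 \<le> infsum (g k) UNIV" by (simp add: g_def)
    then show ?thesis by (smt (verit) norm_ge_zero)
  qed
  have "(\<lambda>\<alpha>. \<Prod>k<N. g k (\<alpha> k)) summable_on (MIx N)"
  proof (rule ccontr)
    assume "\<not> ?thesis"
    then have "infsum (\<lambda>\<alpha>. \<Prod>k<N. g k (\<alpha> k)) (MIx N) = 0" by (simp add: infsum_not_exists)
    moreover have "infsum (\<lambda>\<alpha>. \<Prod>k<N. g k (\<alpha> k)) (MIx N) = (\<Prod>k<N. infsum (g k) UNIV)"
      by (rule prod_infsum_MIx[OF gs])
    moreover have "(\<Prod>k<N. infsum (g k) UNIV) \<ge> 1"
      using g1 by (simp add: prod_ge_1)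
    ultimately show False by linarith
  qed
  then show ?thesis
  proof (rule summable_on_comparison_test)
    fix \<alpha>
    have "norm (\<Prod>k<N. f k (\<alpha> k)) = (\<Prod>k<N. norm (f k (\<alpha> k)))" by (simp add: prod_norm)
    also have "\<dots> \<le> (\<Prod>k<N. g k (\<alpha> k))" by (rule prod_mono) (auto simp: g_def)
    finally show "norm (\<Prod>k<N. f k (\<alpha> k)) \<le> (\<Prod>k<N. g k (\<alpha> k))" .
  qed simp
qed


lemma mi_fact_MIx: "\<alpha> \<in> MIx N \<Longrightarrow> mi_fact \<alpha> = (\<Prod>k<N. fact (\<alpha> k))"
  unfolding mi_fact_def by (rule prod_supp_MIx[where h="\<lambda>k j. fact j"]) auto

lemma mi_weight_MIx: "\<alpha> \<in> MIx N \<Longrightarrow> mi_weight \<alpha> = (\<Prod>k<N. (2 * real k + 2) ^ \<alpha> k)"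
  unfolding mi_weight_def by (rule prod_supp_MIx[where h="\<lambda>k j. (2 * real k + 2) ^ j"]) auto

lemma mpow_MIx: "\<alpha> \<in> MIx N \<Longrightarrow> mpow \<xi> \<alpha> = (\<Prod>k<N. \<xi> k ^ \<alpha> k)"
  unfolding mpow_def by (rule prod_supp_MIx[where h="\<lambda>k j. \<xi> k ^ j"]) auto

lemma mi_fact_pos: "mi_fact \<alpha> > 0"
  unfolding mi_fact_def by (rule prod_pos) auto

lemma mi_weight_ge1: "mi_weight \<alpha> \<ge> 1"
  unfolding mi_weight_def by (rule prod_ge_1) auto

lemma summable_MI_prod:
  fixes f :: "nat \<Rightarrow> nat \<Rightarrow> real"
  assumes f0: "\<And>k. f k 0 = 1" and fnn: "\<And>k j. f k j \<ge> 0"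
    and fs: "\<And>k. (\<lambda>j. f k j) summable_on UNIV"
    and bnd: "\<And>N. (\<Prod>k<N. infsum (f k) UNIV) \<le> C"
  shows "(\<lambda>\<alpha>. \<Prod>k\<in>{k. \<alpha> k \<noteq> 0}. f k (\<alpha> k)) summable_on multi_indices"
proof (rule nonneg_bdd_above_summable_on)
  show "\<And>\<alpha>. \<alpha> \<in> multi_indices \<Longrightarrow> 0 \<le> (\<Prod>k\<in>{k. \<alpha> k \<noteq> 0}. f k (\<alpha> k))"
    by (simp add: prod_nonneg fnn)
  show "bdd_above (sum (\<lambda>\<alpha>. \<Prod>k\<in>{k. \<alpha> k \<noteq> 0}. f k (\<alpha> k)) ` {F. F \<subseteq> multi_indices \<and> finite F})"
  proof (rule bdd_aboveI2)
    fix F assume "F \<in> {F. F \<subseteq> multi_indices \<and> finite F}"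
    then have FF: "finite F" "F \<subseteq> multi_indices" by auto
    then obtain N where N0: "F \<subseteq> MIx N" using finite_MIx by blast
    note N = N0 FF(1)
    have fn: "(\<lambda>j. norm (f k j)) = (\<lambda>j. f k j)" for k using fnn by auto
    have fsN: "(\<lambda>j. norm (f k j)) summable_on UNIV" for k using fs fn by metis
    have pn: "(\<lambda>\<alpha>. norm (\<Prod>k<N. f k (\<alpha> k))) = (\<lambda>\<alpha>. \<Prod>k<N. f k (\<alpha> k))"
      using fnn by (auto simp: prod_nonneg)
    have "(\<lambda>\<alpha>. norm (\<Prod>k<N. f k (\<alpha> k))) summable_on MIx N"
      by (rule prod_abs_summable_MIx[OF fsN])
    then have sN: "(\<lambda>\<alpha>. \<Prod>k<N. f k (\<alpha> k)) summable_on MIx N"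
      unfolding pn .
    have "sum (\<lambda>\<alpha>. \<Prod>k\<in>{k. \<alpha> k \<noteq> 0}. f k (\<alpha> k)) F = sum (\<lambda>\<alpha>. \<Prod>k<N. f k (\<alpha> k)) F"
      by (rule sum.cong) (use N prod_supp_MIx[where h=f] f0 in auto)
    also have "\<dots> \<le> infsum (\<lambda>\<alpha>. \<Prod>k<N. f k (\<alpha> k)) (MIx N)"
      by (rule finite_sum_le_infsum[OF sN N(2) N(1)]) (simp add: prod_nonneg fnn)
    also have "\<dots> = (\<Prod>k<N. infsum (f k) UNIV)" by (rule prod_infsum_MIx[OF fsN])
    also have "\<dots> \<le> C" by (rule bnd)
    finally show "sum (\<lambda>\<alpha>. \<Prod>k\<in>{k. \<alpha> k \<noteq> 0}. f k (\<alpha> k)) F \<le> C" .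
  qed
qed

lemma exp_has_sum:
  fixes x :: real assumes "x \<ge> 0"
  shows "((\<lambda>j. x ^ j / fact j) has_sum exp x) UNIV"
proof -
  have "(\<lambda>j. x ^ j /\<^sub>R fact j) sums exp x" by (rule exp_converges)
  then have "(\<lambda>j. x ^ j / fact j) sums exp x" by (simp add: divide_inverse_commute)
  then show ?thesis by (rule sums_nonneg_imp_has_sum) (use assms in auto)
qed

lemma exp_prod_summable:
  fixes x :: "nat \<Rightarrow> real"
  assumes "\<And>k. x k \<ge> 0" "summable x"
  shows "(\<lambda>\<alpha>. \<Prod>k\<in>{k. \<alpha> k \<noteq> 0}. x k ^ \<alpha> k / fact (\<alpha> k)) summable_on multi_indices"
proof (rule summable_MI_prod[where C="exp (suminf x)"])
  show "\<And>k. (\<lambda>j. x k ^ j / fact j) summable_on UNIV" using exp_has_sum assms(1) has_sum_imp_summable by blast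
  show "0 \<le> x k ^ j / fact j" for k j using assms(1) by simp
  show "x k ^ 0 / fact 0 = 1" for k by simp
  fix N
  have "(\<Prod>k<N. infsum (\<lambda>j. x k ^ j / fact j) UNIV) = (\<Prod>k<N. exp (x k))"
    by (intro prod.cong refl infsumI exp_has_sum assms(1))
  also have "\<dots> = exp (\<Sum>k<N. x k)" by (simp add: exp_sum)
  also have "\<dots> \<le> exp (suminf x)" using sum_le_suminf[OF assms(2), of "{..<N}"] assms(1) by auto
  finally show "(\<Prod>k<N. infsum (\<lambda>j. x k ^ j / fact j) UNIV) \<le> exp (suminf x)" .
qed

lemma amgm_aux:
  fixes a W cm mm :: real
  assumes "a > 0" "W > 0" "cm \<ge> 0" "mm \<ge> 0"
  shows "cm * mm \<le> a * cm^2 / W + W * mm^2 / a"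
proof -
  have "0 \<le> (a*cm - W*mm)^2" by simp
  then have "2 * (a*cm) * (W*mm) \<le> (a*cm)^2 + (W*mm)^2" by (simp add: power2_diff)
  moreover have "0 \<le> (a*cm) * (W*mm)" using assms by simp
  ultimately have "cm * mm * (a * W) \<le> (a*cm)^2 + (W*mm)^2" by (simp add: algebra_simps)
  moreover have "a * cm^2 / W + W * mm^2 / a = ((a*cm)^2 + (W*mm)^2) / (a * W)"
    using assms by (simp add: field_simps power2_eq_square)
  moreover have "cm * mm \<le> ((a*cm)^2 + (W*mm)^2) / (a * W)"
    using \<open>cm * mm * (a * W) \<le> (a*cm)^2 + (W*mm)^2\<close> assms by (subst pos_le_divide_eq) auto
  ultimately show ?thesis by simp
qed

definition hterm :: "nat \<Rightarrow> ((nat \<Rightarrow> nat) \<Rightarrow> complex) \<Rightarrow> (nat \<Rightarrow> nat) \<Rightarrow> real" where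
  "hterm p c \<alpha> = mi_fact \<alpha> * (norm (c \<alpha>))\<^sup>2 / mi_weight \<alpha> ^ (2 * p)"

lemma hida_distD:
  assumes "hida_dist c"
  shows "\<And>\<alpha>. \<alpha> \<notin> multi_indices \<Longrightarrow> c \<alpha> = 0" and "\<exists>p. hterm p c summable_on multi_indices"
  using assms unfolding hida_dist_def hterm_def by auto

lemma hida_distI:
  assumes "\<And>\<alpha>. \<alpha> \<notin> multi_indices \<Longrightarrow> c \<alpha> = 0" and "hterm p c summable_on multi_indices"
  shows "hida_dist c"
  using assms unfolding hida_dist_def hterm_def by auto

lemma hterm_nonneg: "hterm p c \<alpha> \<ge> 0"
  unfolding hterm_def using mi_fact_pos[of \<alpha>] mi_weight_ge1[of \<alpha>] by simp

lemma hterm_mono: assumes "p \<le> q" shows "hterm q c \<alpha> \<le> hterm p c \<alpha>"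
proof -
  have w: "mi_weight \<alpha> ^ (2*p) \<le> mi_weight \<alpha> ^ (2*q)"
    using mi_weight_ge1[of \<alpha>] assms by (intro power_increasing) auto
  have "mi_weight \<alpha> ^ (2*p) > 0" using mi_weight_ge1[of \<alpha>] by simp
  then show ?thesis unfolding hterm_def using w mi_fact_pos[of \<alpha>]
    by (intro divide_left_mono) auto
qed

lemma hterm_summable_mono:
  assumes "hterm p c summable_on multi_indices" "p \<le> q"
  shows "hterm q c summable_on multi_indices"
  by (rule summable_on_comparison_test[OF assms(1)]) (use hterm_mono[OF assms(2)] hterm_nonneg in auto)

lemma norm_mpow_sq:
  fixes \<xi> :: "nat \<Rightarrow> complex"
  assumes "\<alpha> \<in> multi_indices"
  shows "(\<Prod>k\<in>{k. \<alpha> k \<noteq> 0}. ((norm (\<xi> k))\<^sup>2 * (2 * real k + 2) ^ (2*p)) ^ \<alpha> k / fact (\<alpha> k))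
      = mi_weight \<alpha> ^ (2*p) * (norm (mpow \<xi> \<alpha>))\<^sup>2 / mi_fact \<alpha>"
proof -
  obtain N where N: "\<alpha> \<in> MIx N" using MI_MIx assms by auto
  have "(\<Prod>k\<in>{k. \<alpha> k \<noteq> 0}. ((norm (\<xi> k))\<^sup>2 * (2 * real k + 2) ^ (2*p)) ^ \<alpha> k / fact (\<alpha> k))
      = (\<Prod>k<N. ((norm (\<xi> k))\<^sup>2 * (2 * real k + 2) ^ (2*p)) ^ \<alpha> k / fact (\<alpha> k))"
    by (rule prod_supp_MIx[OF N, where h="\<lambda>k j. ((norm (\<xi> k))\<^sup>2 * (2 * real k + 2) ^ (2*p)) ^ j / fact j"]) simp
  also have "\<dots> = (\<Prod>k<N. ((2 * real k + 2) ^ \<alpha> k) ^ (2*p) * (norm (\<xi> k ^ \<alpha> k))\<^sup>2 / fact (\<alpha> k))"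
  proof (rule prod.cong[OF refl])
    fix k
    have aux: "((x^2 * y^(2*p))^j) = (y^j)^(2*p) * (x^j)^2" for x y :: real and j
      by (simp add: power_mult_distrib power_mult[symmetric] mult.commute)
    show "((norm (\<xi> k))\<^sup>2 * (2 * real k + 2) ^ (2*p)) ^ \<alpha> k / fact (\<alpha> k) = ((2 * real k + 2) ^ \<alpha> k) ^ (2*p) * (norm (\<xi> k ^ \<alpha> k))\<^sup>2 / fact (\<alpha> k)"
      by (simp add: aux norm_power)
  qed
  also have "\<dots> = (\<Prod>k<N. (2 * real k + 2) ^ \<alpha> k) ^ (2*p) * (\<Prod>k<N. norm (\<xi> k ^ \<alpha> k))\<^sup>2 / (\<Prod>k<N. fact (\<alpha> k))"
    by (simp add: prod_dividef prod.distrib prod_power_distrib)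
  also have "\<dots> = mi_weight \<alpha> ^ (2*p) * (norm (mpow \<xi> \<alpha>))\<^sup>2 / mi_fact \<alpha>"
    using N by (simp add: mi_weight_MIx mpow_MIx mi_fact_MIx prod_norm)
  finally show ?thesis .
qed

lemma S_summable_norm:
  assumes "hida_dist c" "\<xi> \<in> Sc"
  shows "(\<lambda>\<alpha>. norm (c \<alpha> * mpow \<xi> \<alpha>)) summable_on multi_indices"
proof -
  obtain p where hp: "hterm p c summable_on multi_indices" using hida_distD(2)[OF assms(1)] by auto
  define x where "x k = (norm (\<xi> k))\<^sup>2 * (2 * real k + 2) ^ (2*p)" for k
  have xs: "summable x" using assms(2) unfolding Sc_def x_def by auto
  have x0: "x k \<ge> 0" for k by (simp add: x_def)
  have F: "(\<lambda>\<alpha>. \<Prod>k\<in>{k. \<alpha> k \<noteq> 0}. x k ^ \<alpha> k / fact (\<alpha> k)) summable_on multi_indices"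
    by (rule exp_prod_summable[OF x0 xs])
  have "(\<lambda>\<alpha>. \<Prod>k\<in>{k. \<alpha> k \<noteq> 0}. x k ^ \<alpha> k / fact (\<alpha> k)) summable_on multi_indices
     \<longleftrightarrow> (\<lambda>\<alpha>. mi_weight \<alpha> ^ (2*p) * (norm (mpow \<xi> \<alpha>))\<^sup>2 / mi_fact \<alpha>) summable_on multi_indices"
    by (rule summable_on_cong) (unfold x_def, rule norm_mpow_sq)
  with F have F': "(\<lambda>\<alpha>. mi_weight \<alpha> ^ (2*p) * (norm (mpow \<xi> \<alpha>))\<^sup>2 / mi_fact \<alpha>) summable_on multi_indices"
    by blast
  have sum: "(\<lambda>\<alpha>. hterm p c \<alpha> + mi_weight \<alpha> ^ (2*p) * (norm (mpow \<xi> \<alpha>))\<^sup>2 / mi_fact \<alpha>) summable_on multi_indices"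
    by (rule summable_on_add[OF hp F'])
  show ?thesis
  proof (rule summable_on_comparison_test[OF sum])
    fix \<alpha>
    show "norm (c \<alpha> * mpow \<xi> \<alpha>) \<le> hterm p c \<alpha> + mi_weight \<alpha> ^ (2*p) * (norm (mpow \<xi> \<alpha>))\<^sup>2 / mi_fact \<alpha>"
      unfolding hterm_def norm_mult
      by (rule amgm_aux) (use mi_fact_pos[of \<alpha>] mi_weight_ge1[of \<alpha>] in auto)
  qed simp
qed

lemma S_summable:
  assumes "hida_dist c" "\<xi> \<in> Sc"
  shows "(\<lambda>\<alpha>. c \<alpha> * mpow \<xi> \<alpha>) summable_on multi_indices"
  by (rule abs_summable_summable) (rule S_summable_norm[OF assms])

lemma S_transform_eq: "S_transform c \<xi> = infsum (\<lambda>\<alpha>. c \<alpha> * mpow \<xi> \<alpha>) multi_indices"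
  unfolding S_transform_def dual_pair_def wick_exp_def mpow_def[symmetric]
proof (rule infsum_cong)
  fix \<alpha>
  have "mi_fact \<alpha> \<noteq> 0" using mi_fact_pos[of \<alpha>] by simp
  then show "complex_of_real (mi_fact \<alpha>) * c \<alpha> * (mpow \<xi> \<alpha> / complex_of_real (mi_fact \<alpha>)) = c \<alpha> * mpow \<xi> \<alpha>"
    by (simp add: field_simps)
qed

lemma T_transform_eq: "T_transform c \<xi> = exp (- bil \<xi> \<xi> / 2) * S_transform c (\<lambda>k. \<i> * \<xi> k)"
proof -
  have "T_transform c \<xi> = infsum (\<lambda>\<alpha>. exp (- bil \<xi> \<xi> / 2) * (of_real (mi_fact \<alpha>) * c \<alpha> * wick_exp (\<lambda>k. \<i> * \<xi> k) \<alpha>)) multi_indices"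
    unfolding T_transform_def dual_pair_def char_exp_def by (rule infsum_cong) (simp add: algebra_simps)
  also have "\<dots> = exp (- bil \<xi> \<xi> / 2) * S_transform c (\<lambda>k. \<i> * \<xi> k)"
    unfolding S_transform_def dual_pair_def by (rule infsum_cmult_right')
  finally show ?thesis .
qed


lemma Sc_finite_support:
  assumes "\<And>k. k \<ge> N \<Longrightarrow> \<xi> k = 0"
  shows "\<xi> \<in> Sc"
  unfolding Sc_def
proof (intro CollectI allI)
  fix p :: nat
  show "summable (\<lambda>k. (norm (\<xi> k))\<^sup>2 * (2 * real k + 2) ^ (2 * p))"
    by (rule summable_finite[of "{..<N}"]) (use assms in auto)
qed

lemma Sc_scale:
  assumes "\<xi> \<in> Sc"
  shows "(\<lambda>k. z * \<xi> k) \<in> Sc"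
  unfolding Sc_def
proof (intro CollectI allI)
  fix p :: nat
  have "summable (\<lambda>k. (norm (\<xi> k))\<^sup>2 * (2 * real k + 2) ^ (2 * p))" using assms unfolding Sc_def by auto
  then have "summable (\<lambda>k. (norm z)\<^sup>2 * ((norm (\<xi> k))\<^sup>2 * (2 * real k + 2) ^ (2 * p)))"
    by (rule summable_mult)
  then show "summable (\<lambda>k. (norm (z * \<xi> k))\<^sup>2 * (2 * real k + 2) ^ (2 * p))"
    by (simp add: norm_mult power_mult_distrib mult.assoc)
qed

lemma hida_diff:
  assumes "hida_dist c" "hida_dist d"
  shows "hida_dist (\<lambda>\<alpha>. c \<alpha> - d \<alpha>)"
proof -
  obtain p where p: "hterm p c summable_on multi_indices" using hida_distD(2)[OF assms(1)] by auto
  obtain q where q: "hterm q d summable_on multi_indices" using hida_distD(2)[OF assms(2)] by auto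
  have p': "hterm (max p q) c summable_on multi_indices" by (rule hterm_summable_mono[OF p]) simp
  have q': "hterm (max p q) d summable_on multi_indices" by (rule hterm_summable_mono[OF q]) simp
  have s: "(\<lambda>\<alpha>. 2 * hterm (max p q) c \<alpha> + 2 * hterm (max p q) d \<alpha>) summable_on multi_indices"
    by (intro summable_on_add summable_on_cmult_right p' q')
  show ?thesis
  proof (rule hida_distI)
    show "\<alpha> \<notin> multi_indices \<Longrightarrow> c \<alpha> - d \<alpha> = 0" for \<alpha>
      using hida_distD(1)[OF assms(1)] hida_distD(1)[OF assms(2)] by simp
    show "hterm (max p q) (\<lambda>\<alpha>. c \<alpha> - d \<alpha>) summable_on multi_indices"
    proof (rule summable_on_comparison_test[OF s])
      fix \<alpha>
      have n: "(norm (c \<alpha> - d \<alpha>))\<^sup>2 \<le> 2 * (norm (c \<alpha>))\<^sup>2 + 2 * (norm (d \<alpha>))\<^sup>2"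
      proof -
        have "norm (c \<alpha> - d \<alpha>) \<le> norm (c \<alpha>) + norm (d \<alpha>)" by (rule norm_triangle_ineq4)
        then have "(norm (c \<alpha> - d \<alpha>))\<^sup>2 \<le> (norm (c \<alpha>) + norm (d \<alpha>))\<^sup>2"
          by (rule power_mono) simp
        also have "\<dots> \<le> 2 * (norm (c \<alpha>))\<^sup>2 + 2 * (norm (d \<alpha>))\<^sup>2"
          using sum_squared_le_sum_of_squares_2[of "norm (c \<alpha>)" "norm (d \<alpha>)"]
          by (smt (verit, ccfv_threshold) power2_sum sum_squares_bound)
        finally show ?thesis .
      qed
      define A where "A = mi_fact \<alpha> / mi_weight \<alpha> ^ (2 * max p q)"
      have A: "A \<ge> 0" unfolding A_def using mi_fact_pos[of \<alpha>] mi_weight_ge1[of \<alpha>] by simp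
      have "hterm (max p q) (\<lambda>\<alpha>. c \<alpha> - d \<alpha>) \<alpha> = A * (norm (c \<alpha> - d \<alpha>))\<^sup>2"
        unfolding hterm_def A_def by simp
      also have "\<dots> \<le> A * (2 * (norm (c \<alpha>))\<^sup>2 + 2 * (norm (d \<alpha>))\<^sup>2)"
        by (rule mult_left_mono[OF n A])
      also have "\<dots> = 2 * hterm (max p q) c \<alpha> + 2 * hterm (max p q) d \<alpha>"
        unfolding hterm_def A_def by (simp add: algebra_simps)
      finally show "hterm (max p q) (\<lambda>\<alpha>. c \<alpha> - d \<alpha>) \<alpha> \<le> 2 * hterm (max p q) c \<alpha> + 2 * hterm (max p q) d \<alpha>" .
    qed (rule hterm_nonneg)
  qed
qed

lemma S_diff:
  assumes "hida_dist c" "hida_dist d" "\<xi> \<in> Sc"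
  shows "S_transform (\<lambda>\<alpha>. c \<alpha> - d \<alpha>) \<xi> = S_transform c \<xi> - S_transform d \<xi>"
proof -
  have sc: "(\<lambda>\<alpha>. c \<alpha> * mpow \<xi> \<alpha>) summable_on multi_indices" by (rule S_summable[OF assms(1,3)])
  have sd: "(\<lambda>\<alpha>. - (d \<alpha> * mpow \<xi> \<alpha>)) summable_on multi_indices"
    using S_summable[OF assms(2,3)] by (subst summable_on_uminus)
  have "S_transform (\<lambda>\<alpha>. c \<alpha> - d \<alpha>) \<xi> = infsum (\<lambda>\<alpha>. c \<alpha> * mpow \<xi> \<alpha> + - (d \<alpha> * mpow \<xi> \<alpha>)) multi_indices"
    unfolding S_transform_eq by (simp add: algebra_simps)
  also have "\<dots> = infsum (\<lambda>\<alpha>. c \<alpha> * mpow \<xi> \<alpha>) multi_indices + infsum (\<lambda>\<alpha>. - (d \<alpha> * mpow \<xi> \<alpha>)) multi_indices"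
    by (rule infsum_add[OF sc sd])
  also have "\<dots> = S_transform c \<xi> - S_transform d \<xi>"
    unfolding S_transform_eq infsum_uminus by simp
  finally show ?thesis .
qed

lemma powser_zero_coeffs:
  fixes a :: "nat \<Rightarrow> complex"
  assumes "\<And>t. (\<lambda>n. a n * t ^ n) sums 0"
  shows "a m = 0"
proof (cases "m = 0")
  case True
  then show ?thesis using assms[of 0] powser_sums_zero_iff by blast
next
  case False
  show ?thesis
  proof (rule ccontr)
    assume "a m \<noteq> 0"
    show False
    proof (rule powser_0_nonzero[where r=1 and a=a and \<xi>=0 and f="\<lambda>_. 0" and m=m])
      fix s :: real assume s: "0 < s" and z: "\<And>z::complex. z \<in> cball 0 s - {0} \<Longrightarrow> (\<lambda>_. 0::complex) z \<noteq> 0"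
      have "complex_of_real s \<in> cball 0 s - {0}" using s by auto
      then show False using z[of "complex_of_real s"] by blast
    qed (use assms False \<open>a m \<noteq> 0\<close> in auto)
  qed
qed

lemma digits_inj:
  fixes B :: nat
  assumes "\<forall>k<N. a k < B" "\<forall>k<N. b k < B" "(\<Sum>k<N. a k * B ^ k) = (\<Sum>k<N. b k * B ^ k)"
  shows "\<forall>k<N. a k = b k"
  using assms
proof (induction N arbitrary: a b)
  case 0 then show ?case by simp
next
  case (Suc N)
  have e: "(\<Sum>k<Suc N. f k * B ^ k) = f 0 + B * (\<Sum>k<N. f (Suc k) * B ^ k)" for f
    by (simp add: sum.lessThan_Suc_shift sum_distrib_left algebra_simps del: sum.lessThan_Suc)
  have B: "B > 0" using Suc.prems(1) by auto
  have ea: "a 0 + B * (\<Sum>k<N. a (Suc k) * B ^ k) = b 0 + B * (\<Sum>k<N. b (Suc k) * B ^ k)"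
    using Suc.prems(3) e by metis
  have a0: "a 0 < B" "b 0 < B" using Suc.prems by auto
  have "(a 0 + B * (\<Sum>k<N. a (Suc k) * B ^ k)) mod B = a 0" using a0 by simp
  moreover have "(b 0 + B * (\<Sum>k<N. b (Suc k) * B ^ k)) mod B = b 0" using a0 by simp
  ultimately have h0: "a 0 = b 0" using ea by metis
  then have "(\<Sum>k<N. a (Suc k) * B ^ k) = (\<Sum>k<N. b (Suc k) * B ^ k)" using ea B by simp
  then have "\<forall>k<N. a (Suc k) = b (Suc k)"
    by (intro Suc.IH[of "\<lambda>k. a (Suc k)" "\<lambda>k. b (Suc k)"]) (use Suc.prems in auto)
  then show ?case using h0 by (auto simp: less_Suc_eq_0_disj)
qed

lemma mpow_outside:
  fixes \<xi> :: "nat \<Rightarrow> complex"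
  assumes "\<alpha> \<in> multi_indices" "\<alpha> \<notin> MIx N" "\<And>k. k \<ge> N \<Longrightarrow> \<xi> k = 0"
  shows "mpow \<xi> \<alpha> = 0"
proof -
  obtain k where k: "k \<ge> N" "\<alpha> k \<noteq> 0" using assms(2) unfolding MIx_def by auto
  have "finite {k. \<alpha> k \<noteq> 0}" using assms(1) by (simp add: multi_indices_def)
  moreover have "\<xi> k ^ \<alpha> k = 0" using k assms(3) by simp
  ultimately show ?thesis unfolding mpow_def using k(2) by (intro prod_zero) auto
qed


definition dg :: "nat \<Rightarrow> (nat \<Rightarrow> nat) \<Rightarrow> nat" where "dg N \<alpha> = (\<Sum>k<N. \<alpha> k)"
definition Ed :: "nat \<Rightarrow> nat \<Rightarrow> (nat \<Rightarrow> nat) \<Rightarrow> nat" where "Ed B N \<alpha> = (\<Sum>k<N. \<alpha> k * B ^ k)"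
definition Dd :: "nat \<Rightarrow> nat \<Rightarrow> (nat \<Rightarrow> nat) set" where "Dd N d = {\<alpha> \<in> MIx N. dg N \<alpha> = d}"

lemma dg_ge: "k < N \<Longrightarrow> \<alpha> k \<le> dg N \<alpha>"
  unfolding dg_def by (rule member_le_sum) auto

lemma finite_Dd: "finite (Dd N d)"
proof (rule finite_subset)
  show "Dd N d \<subseteq> (\<lambda>g k. if k < N then g k else 0) ` PiE {..<N} (\<lambda>_. {..d})"
  proof
    fix \<alpha> assume a: "\<alpha> \<in> Dd N d"
    then have "\<alpha> = (\<lambda>k. if k < N then restrict \<alpha> {..<N} k else 0)"
      by (auto simp: Dd_def MIx_def fun_eq_iff)
    moreover have "restrict \<alpha> {..<N} \<in> PiE {..<N} (\<lambda>_. {..d})"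
      using a dg_ge[of _ N \<alpha>] by (auto simp: Dd_def)
    ultimately show "\<alpha> \<in> (\<lambda>g k. if k < N then g k else 0) ` PiE {..<N} (\<lambda>_. {..d})" by blast
  qed
  show "finite ((\<lambda>g k. if k < N then g k else 0) ` PiE {..<N} (\<lambda>_. {..d}))"
    by (intro finite_imageI finite_PiE) auto
qed

lemma mpow_line:
  fixes t u :: complex
  assumes "\<alpha> \<in> MIx N"
  shows "mpow (\<lambda>k. if k < N then t * u ^ (B ^ k) else 0) \<alpha> = t ^ dg N \<alpha> * u ^ Ed B N \<alpha>"
proof -
  have "mpow (\<lambda>k. if k < N then t * u ^ (B ^ k) else 0) \<alpha> = (\<Prod>k<N. (t * u ^ (B ^ k)) ^ \<alpha> k)"
    unfolding mpow_MIx[OF assms] by (rule prod.cong) auto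
  also have "\<dots> = (\<Prod>k<N. t ^ \<alpha> k) * (\<Prod>k<N. u ^ (\<alpha> k * B ^ k))"
    by (simp add: power_mult_distrib prod.distrib power_mult[symmetric] mult.commute)
  also have "\<dots> = t ^ dg N \<alpha> * u ^ Ed B N \<alpha>"
    unfolding dg_def Ed_def by (simp add: power_sum)
  finally show ?thesis .
qed

lemma bij_Dd: "bij_betw snd (Sigma UNIV (Dd N)) (MIx N)"
  unfolding bij_betw_def
proof
  show "inj_on snd (Sigma UNIV (Dd N))" by (auto simp: inj_on_def Dd_def)
  show "snd ` Sigma UNIV (Dd N) = MIx N"
  proof
    show "snd ` Sigma UNIV (Dd N) \<subseteq> MIx N" by (auto simp: Dd_def)
    show "MIx N \<subseteq> snd ` Sigma UNIV (Dd N)"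
    proof
      fix \<alpha> assume "\<alpha> \<in> MIx N"
      then have "(dg N \<alpha>, \<alpha>) \<in> Sigma UNIV (Dd N)" by (auto simp: Dd_def)
      then show "\<alpha> \<in> snd ` Sigma UNIV (Dd N)" by force
    qed
  qed
qed

lemma S_line_coeffs:
  assumes hc: "hida_dist c" and z: "\<forall>\<xi>\<in>Sc. S_transform c \<xi> = 0"
  shows "(\<Sum>\<alpha>\<in>Dd N d. c \<alpha> * u ^ Ed B N \<alpha>) = 0"
proof -
  define a where "a d = (\<Sum>\<alpha>\<in>Dd N d. c \<alpha> * u ^ Ed B N \<alpha>)" for d
  have "(\<lambda>d. a d * t ^ d) sums 0" for t
  proof -
    define \<xi> where "\<xi> = (\<lambda>k. if k < N then t * u ^ (B ^ k) else 0)"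
    have \<xi>: "\<xi> \<in> Sc" unfolding \<xi>_def by (rule Sc_finite_support[of N]) auto
    define g where "g \<alpha> = c \<alpha> * mpow \<xi> \<alpha>" for \<alpha>
    have "(g has_sum S_transform c \<xi>) multi_indices"
      unfolding g_def S_transform_eq using S_summable[OF hc \<xi>] by (rule has_sum_infsum)
    then have g1: "(g has_sum 0) multi_indices" using z \<xi> by simp
    have g2: "(g has_sum 0) (MIx N)"
    proof (subst has_sum_cong_neutral[where T="multi_indices" and g=g])
      show "\<And>x. x \<in> multi_indices - MIx N \<Longrightarrow> g x = 0"
        unfolding g_def by (subst mpow_outside[of _ N]) (auto simp: \<xi>_def)
    qed (use g1 MIx_MI in auto)
    have g3: "((\<lambda>x. g (snd x)) has_sum 0) (Sigma UNIV (Dd N))"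
      using has_sum_reindex_bij_betw[OF bij_Dd[of N], where f=g and S=0] g2 by simp
    have inner: "((\<lambda>\<alpha>. g (snd (d, \<alpha>))) has_sum (a d * t ^ d)) (Dd N d)" for d
    proof -
      have "sum g (Dd N d) = a d * t ^ d"
        unfolding a_def sum_distrib_right
        by (rule sum.cong) (auto simp: g_def \<xi>_def mpow_line Dd_def)
      then show ?thesis using has_sum_finite[OF finite_Dd, of g N d] by simp
    qed
    have "((\<lambda>d. a d * t ^ d) has_sum 0) UNIV"
      by (rule has_sum_Sigma'[OF g3[unfolded case_prod_unfold[symmetric]]]) (use inner in auto)
    then show ?thesis by (rule has_sum_imp_sums)
  qed
  then have "a d = 0" by (rule powser_zero_coeffs)
  then show ?thesis by (simp add: a_def)
qed

theorem S_inj: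
  assumes hc: "hida_dist c" and z: "\<forall>\<xi>\<in>Sc. S_transform c \<xi> = 0"
  shows "c \<alpha>0 = 0"
proof (cases "\<alpha>0 \<in> multi_indices")
  case False
  then show ?thesis using hida_distD(1)[OF hc] by simp
next
  case True
  then obtain N where N: "\<alpha>0 \<in> MIx N" using MI_MIx by auto
  define n where "n = dg N \<alpha>0"
  define B where "B = Suc n"
  define D where "D = Dd N n"
  define E where "E = Ed B N"
  define K where "K = (\<Sum>\<alpha>\<in>D. E \<alpha>)"
  have fD: "finite D" unfolding D_def by (rule finite_Dd)
  have a0D: "\<alpha>0 \<in> D" unfolding D_def Dd_def n_def using N by simp
  have EK: "E \<alpha> \<le> K" if "\<alpha> \<in> D" for \<alpha> unfolding K_def by (rule member_le_sum[OF that]) (use fD in auto)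
  define coef where "coef j = (\<Sum>\<alpha>\<in>{\<alpha>\<in>D. E \<alpha> = j}. c \<alpha>)" for j
  have poly: "(\<Sum>j\<le>K. coef j * u ^ j) = 0" for u
  proof -
    have "(\<Sum>j\<le>K. coef j * u ^ j) = (\<Sum>j\<le>K. \<Sum>\<alpha>\<in>{\<alpha>\<in>D. E \<alpha> = j}. c \<alpha> * u ^ E \<alpha>)"
      unfolding coef_def sum_distrib_right by (rule sum.cong) auto
    also have "\<dots> = (\<Sum>\<alpha>\<in>D. c \<alpha> * u ^ E \<alpha>)"
      by (rule sum.group[OF fD]) (use EK in auto)
    also have "\<dots> = 0" unfolding D_def E_def by (rule S_line_coeffs[OF hc z])
    finally show ?thesis .
  qed
  have "coef (E \<alpha>0) = 0"
    using polyfun_eq_0[where n=K and c=coef] poly EK[OF a0D] by auto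
  moreover have "{\<alpha>\<in>D. E \<alpha> = E \<alpha>0} = {\<alpha>0}"
  proof (intro equalityI subsetI)
    fix \<alpha> assume a: "\<alpha> \<in> {\<alpha>\<in>D. E \<alpha> = E \<alpha>0}"
    then have aD: "\<alpha> \<in> MIx N" "dg N \<alpha> = n" by (auto simp: D_def Dd_def)
    have "\<forall>k<N. \<alpha> k = \<alpha>0 k"
    proof (rule digits_inj)
      show "\<forall>k<N. \<alpha> k < B" using dg_ge[of _ N \<alpha>] aD unfolding B_def by (auto simp: less_Suc_eq_le)
      show "\<forall>k<N. \<alpha>0 k < B" using dg_ge[of _ N \<alpha>0] unfolding B_def n_def by (auto simp: less_Suc_eq_le)
      show "(\<Sum>k<N. \<alpha> k * B ^ k) = (\<Sum>k<N. \<alpha>0 k * B ^ k)" using a by (simp add: E_def Ed_def)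
    qed
    then have "\<alpha> = \<alpha>0" using aD(1) N unfolding MIx_def by (auto simp: fun_eq_iff not_less[symmetric]) (metis not_less)
    then show "\<alpha> \<in> {\<alpha>0}" by simp
  qed (use a0D in auto)
  ultimately show ?thesis unfolding coef_def by simp
qed


definition Dv :: "(nat \<Rightarrow> nat) \<Rightarrow> (nat \<Rightarrow> nat) set" where "Dv \<gamma> = {\<alpha>. \<forall>k. \<alpha> k \<le> \<gamma> k}"

definition cp :: "((nat \<Rightarrow> nat) \<Rightarrow> complex) \<Rightarrow> ((nat \<Rightarrow> nat) \<Rightarrow> complex) \<Rightarrow> (nat \<Rightarrow> nat) \<Rightarrow> complex" where
  "cp c d \<gamma> = (if \<gamma> \<in> multi_indices then (\<Sum>\<alpha>\<in>Dv \<gamma>. c \<alpha> * d (\<lambda>k. \<gamma> k - \<alpha> k)) else 0)"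

lemma Dv_MIx: "\<gamma> \<in> MIx N \<Longrightarrow> \<alpha> \<in> Dv \<gamma> \<Longrightarrow> \<alpha> \<in> MIx N"
proof -
  assume g: "\<gamma> \<in> MIx N" and a: "\<alpha> \<in> Dv \<gamma>"
  have "\<alpha> k = 0" if "k \<ge> N" for k
  proof -
    have "\<alpha> k \<le> \<gamma> k" using a by (simp add: Dv_def)
    moreover have "\<gamma> k = 0" using g that by (simp add: MIx_def)
    ultimately show ?thesis by simp
  qed
  then show ?thesis by (simp add: MIx_def)
qed

lemma diff_MIx: "\<gamma> \<in> MIx N \<Longrightarrow> (\<lambda>k. \<gamma> k - \<alpha> k) \<in> MIx N"
  unfolding MIx_def by auto

lemma add_MIx: "\<alpha> \<in> MIx N \<Longrightarrow> \<beta> \<in> MIx N \<Longrightarrow> (\<lambda>k. \<alpha> k + \<beta> k) \<in> MIx N"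
  unfolding MIx_def by auto

lemma Dv_eq: assumes "\<gamma> \<in> MIx N"
  shows "Dv \<gamma> = (\<lambda>g k. if k < N then g k else 0) ` PiE {..<N} (\<lambda>k. {..\<gamma> k})"
proof (intro equalityI subsetI)
  fix \<alpha> assume a: "\<alpha> \<in> Dv \<gamma>"
  then have "\<alpha> = (\<lambda>k. if k < N then restrict \<alpha> {..<N} k else 0)"
    using Dv_MIx[OF assms a] by (auto simp: MIx_def fun_eq_iff)
  moreover have "restrict \<alpha> {..<N} \<in> PiE {..<N} (\<lambda>k. {..\<gamma> k})"
    using a by (auto simp: Dv_def)
  ultimately show "\<alpha> \<in> (\<lambda>g k. if k < N then g k else 0) ` PiE {..<N} (\<lambda>k. {..\<gamma> k})" by blast
next
  fix \<alpha> assume "\<alpha> \<in> (\<lambda>g k. if k < N then g k else 0) ` PiE {..<N} (\<lambda>k. {..\<gamma> k})"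
  then show "\<alpha> \<in> Dv \<gamma>" using assms by (auto simp: Dv_def MIx_def PiE_def Pi_def)
qed

lemma finite_Dv: assumes "\<gamma> \<in> multi_indices" shows "finite (Dv \<gamma>)"
proof -
  obtain N where "\<gamma> \<in> MIx N" using MI_MIx assms by auto
  then show ?thesis unfolding Dv_eq[OF \<open>\<gamma> \<in> MIx N\<close>] by (intro finite_imageI finite_PiE) auto
qed

lemma card_Dv: assumes "\<gamma> \<in> MIx N" shows "card (Dv \<gamma>) \<le> 2 ^ dg N \<gamma>"
proof -
  have inj: "inj_on (\<lambda>g k. if k < N then g k else 0) (PiE {..<N} (\<lambda>k. {..\<gamma> k}))"
  proof (rule inj_onI)
    fix g h assume g: "g \<in> PiE {..<N} (\<lambda>k. {..\<gamma> k})" and h: "h \<in> PiE {..<N} (\<lambda>k. {..\<gamma> k})"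
      and e: "(\<lambda>k. if k < N then g k else 0) = (\<lambda>k. if k < N then h k else 0)"
    show "g = h"
    proof (rule PiE_ext[OF g h])
      fix k assume "k \<in> {..<N}" then show "g k = h k" using fun_cong[OF e, of k] by simp
    qed
  qed
  have "card (Dv \<gamma>) = (\<Prod>k<N. card {..\<gamma> k})"
    unfolding Dv_eq[OF assms] card_image[OF inj] by (rule card_PiE) simp
  also have "\<dots> = (\<Prod>k<N. Suc (\<gamma> k))" by simp
  also have "\<dots> \<le> (\<Prod>k<N. 2 ^ \<gamma> k)"
    by (rule prod_mono) (auto simp: Suc_le_eq less_exp)
  also have "\<dots> = 2 ^ dg N \<gamma>" unfolding dg_def by (simp add: power_sum)
  finally show ?thesis .
qed

lemma fact_add_le: "(fact (a + b) :: real) \<le> 2 ^ (a + b) * fact a * fact b"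
proof -
  have "fact a * fact b * ((a + b) choose a) = (fact (a + b) :: nat)"
    using binomial_fact_lemma[of a "a + b"] by simp
  then have e: "(fact (a + b) :: real) = fact a * fact b * real ((a + b) choose a)"
    by (metis of_nat_fact of_nat_mult)
  have "real ((a + b) choose a) \<le> 2 ^ (a + b)"
    using binomial_le_pow2[of "a + b" a] by (metis of_nat_le_iff of_nat_numeral of_nat_power)
  then show ?thesis unfolding e by (simp add: mult_left_mono mult.commute mult.left_commute)
qed

lemma weight_split:
  assumes "\<gamma> \<in> MIx N" "\<alpha> \<in> Dv \<gamma>"
  shows "mi_weight \<gamma> = mi_weight \<alpha> * mi_weight (\<lambda>k. \<gamma> k - \<alpha> k)"
    and "mi_fact \<gamma> \<le> 2 ^ dg N \<gamma> * mi_fact \<alpha> * mi_fact (\<lambda>k. \<gamma> k - \<alpha> k)"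
    and "mi_weight \<gamma> ^ 2 \<ge> 4 ^ dg N \<gamma>"
proof -
  have a: "\<alpha> \<in> MIx N" by (rule Dv_MIx[OF assms])
  have b: "(\<lambda>k. \<gamma> k - \<alpha> k) \<in> MIx N" by (rule diff_MIx[OF assms(1)])
  have g: "\<gamma> k = \<alpha> k + (\<gamma> k - \<alpha> k)" for k using assms(2) by (auto simp: Dv_def)
  show "mi_weight \<gamma> = mi_weight \<alpha> * mi_weight (\<lambda>k. \<gamma> k - \<alpha> k)"
    unfolding mi_weight_MIx[OF assms(1)] mi_weight_MIx[OF a] mi_weight_MIx[OF b] prod.distrib[symmetric]
    by (rule prod.cong[OF refl]) (subst g, simp add: power_add)
  have "mi_fact \<gamma> = (\<Prod>k<N. fact (\<alpha> k + (\<gamma> k - \<alpha> k)))"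
    unfolding mi_fact_MIx[OF assms(1)] using g by (metis (no_types, lifting))
  also have "\<dots> \<le> (\<Prod>k<N. 2 ^ (\<alpha> k + (\<gamma> k - \<alpha> k)) * fact (\<alpha> k) * fact (\<gamma> k - \<alpha> k))"
    by (rule prod_mono) (simp add: fact_add_le)
  also have "\<dots> = 2 ^ dg N \<gamma> * mi_fact \<alpha> * mi_fact (\<lambda>k. \<gamma> k - \<alpha> k)"
    unfolding mi_fact_MIx[OF a] mi_fact_MIx[OF b] dg_def prod.distrib power_sum[symmetric]
    using g by (metis (no_types, lifting) sum.cong)
  finally show "mi_fact \<gamma> \<le> 2 ^ dg N \<gamma> * mi_fact \<alpha> * mi_fact (\<lambda>k. \<gamma> k - \<alpha> k)" .
  have "(4::real) ^ dg N \<gamma> = (\<Prod>k<N. 4 ^ \<gamma> k)" unfolding dg_def by (simp add: power_sum)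
  also have "\<dots> \<le> (\<Prod>k<N. ((2 * real k + 2) ^ \<gamma> k) ^ 2)"
  proof (rule prod_mono)
    fix k
    have "(4::real) ^ \<gamma> k = (2 ^ 2) ^ \<gamma> k" by simp
    also have "\<dots> = (2 ^ \<gamma> k) ^ 2" by (simp only: power_mult[symmetric] mult.commute)
    also have "\<dots> \<le> ((2 * real k + 2) ^ \<gamma> k) ^ 2" by (intro power_mono) auto
    finally show "0 \<le> (4::real) ^ \<gamma> k \<and> 4 ^ \<gamma> k \<le> ((2 * real k + 2) ^ \<gamma> k) ^ 2" by simp
  qed
  also have "\<dots> = mi_weight \<gamma> ^ 2" unfolding mi_weight_MIx[OF assms(1)] by (simp add: prod_power_distrib)
  finally show "mi_weight \<gamma> ^ 2 \<ge> 4 ^ dg N \<gamma>" .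
qed


lemma norm_sum_sq_le:
  fixes x :: "'a \<Rightarrow> complex"
  assumes "finite A"
  shows "(norm (\<Sum>a\<in>A. x a))\<^sup>2 \<le> real (card A) * (\<Sum>a\<in>A. (norm (x a))\<^sup>2)"
proof -
  have "norm (\<Sum>a\<in>A. x a) \<le> (\<Sum>a\<in>A. norm (x a))" by (rule norm_sum)
  then have "(norm (\<Sum>a\<in>A. x a))\<^sup>2 \<le> (\<Sum>a\<in>A. norm (x a))\<^sup>2" by (rule power_mono) simp
  also have "\<dots> \<le> (\<Sum>a\<in>A. (norm (x a))\<^sup>2) * real (card A)" by (rule sum_squared_le_sum_of_squares)
  finally show ?thesis by (simp add: mult.commute)
qed

lemma cp_term_bound:
  assumes "\<gamma> \<in> multi_indices"
  shows "hterm (Suc p) (cp c d) \<gamma> \<le> (\<Sum>\<alpha>\<in>Dv \<gamma>. hterm p c \<alpha> * hterm p d (\<lambda>k. \<gamma> k - \<alpha> k))"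
proof -
  obtain N where N: "\<gamma> \<in> MIx N" using MI_MIx assms by auto
  define G where "G = dg N \<gamma>"
  define r where "r = mi_fact \<gamma> / mi_weight \<gamma> ^ (2 * Suc p)"
  have fD: "finite (Dv \<gamma>)" by (rule finite_Dv[OF assms])
  have r0: "r \<ge> 0" unfolding r_def using mi_fact_pos[of \<gamma>] mi_weight_ge1[of \<gamma>] by simp
  have cardD: "real (card (Dv \<gamma>)) \<le> 2 ^ G"
    using card_Dv[OF N] unfolding G_def by (metis of_nat_le_iff of_nat_numeral of_nat_power)
  have "(norm (cp c d \<gamma>))\<^sup>2 \<le> real (card (Dv \<gamma>)) * (\<Sum>\<alpha>\<in>Dv \<gamma>. (norm (c \<alpha> * d (\<lambda>k. \<gamma> k - \<alpha> k)))\<^sup>2)"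
    unfolding cp_def using assms norm_sum_sq_le[OF fD] by simp
  also have "\<dots> = real (card (Dv \<gamma>)) * (\<Sum>\<alpha>\<in>Dv \<gamma>. (norm (c \<alpha>))\<^sup>2 * (norm (d (\<lambda>k. \<gamma> k - \<alpha> k)))\<^sup>2)"
    by (simp add: norm_mult power_mult_distrib)
  also have "\<dots> \<le> 2 ^ G * (\<Sum>\<alpha>\<in>Dv \<gamma>. (norm (c \<alpha>))\<^sup>2 * (norm (d (\<lambda>k. \<gamma> k - \<alpha> k)))\<^sup>2)"
    by (rule mult_right_mono[OF cardD]) (simp add: sum_nonneg)
  finally have n: "(norm (cp c d \<gamma>))\<^sup>2 \<le> 2 ^ G * (\<Sum>\<alpha>\<in>Dv \<gamma>. (norm (c \<alpha>))\<^sup>2 * (norm (d (\<lambda>k. \<gamma> k - \<alpha> k)))\<^sup>2)" .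
  have "hterm (Suc p) (cp c d) \<gamma> = r * (norm (cp c d \<gamma>))\<^sup>2" unfolding hterm_def r_def by simp
  also have "\<dots> \<le> r * (2 ^ G * (\<Sum>\<alpha>\<in>Dv \<gamma>. (norm (c \<alpha>))\<^sup>2 * (norm (d (\<lambda>k. \<gamma> k - \<alpha> k)))\<^sup>2))"
    by (rule mult_left_mono[OF n r0])
  also have "\<dots> = (\<Sum>\<alpha>\<in>Dv \<gamma>. (r * 2 ^ G) * ((norm (c \<alpha>))\<^sup>2 * (norm (d (\<lambda>k. \<gamma> k - \<alpha> k)))\<^sup>2))"
    by (simp add: sum_distrib_left mult.assoc)
  also have "\<dots> \<le> (\<Sum>\<alpha>\<in>Dv \<gamma>. hterm p c \<alpha> * hterm p d (\<lambda>k. \<gamma> k - \<alpha> k))"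
  proof (rule sum_mono)
    fix \<alpha> assume a: "\<alpha> \<in> Dv \<gamma>"
    define \<beta> where "\<beta> = (\<lambda>k. \<gamma> k - \<alpha> k)"
    define Wa where "Wa = mi_weight \<alpha> ^ (2 * p)"
    define Wb where "Wb = mi_weight \<beta> ^ (2 * p)"
    define Q where "Q = mi_weight \<gamma> ^ 2"
    have Wa: "Wa > 0" unfolding Wa_def using mi_weight_ge1[of \<alpha>] by simp
    have Wb: "Wb > 0" unfolding Wb_def using mi_weight_ge1[of \<beta>] by simp
    have Q: "Q \<ge> 4 ^ G" unfolding Q_def G_def using weight_split(3)[OF N a] .
    have Q0: "Q > 0" unfolding Q_def using mi_weight_ge1[of \<gamma>] by simp
    have wg: "mi_weight \<gamma> ^ (2 * Suc p) = Wa * Wb * Q"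
      unfolding Wa_def Wb_def Q_def \<beta>_def weight_split(1)[OF N a]
      by (simp add: power_mult_distrib power_add power2_eq_square mult_ac)
    have fg: "mi_fact \<gamma> \<le> 2 ^ G * mi_fact \<alpha> * mi_fact \<beta>"
      unfolding G_def \<beta>_def by (rule weight_split(2)[OF N a])
    have fab: "mi_fact \<alpha> * mi_fact \<beta> \<ge> 0" using mi_fact_pos[of \<alpha>] mi_fact_pos[of \<beta>] by simp
    have "mi_fact \<gamma> * 2 ^ G \<le> 2 ^ G * mi_fact \<alpha> * mi_fact \<beta> * 2 ^ G"
      by (rule mult_right_mono[OF fg]) simp
    also have "\<dots> = 4 ^ G * (mi_fact \<alpha> * mi_fact \<beta>)"
      by (simp add: power_mult_distrib[symmetric] mult_ac)
    also have "\<dots> \<le> Q * (mi_fact \<alpha> * mi_fact \<beta>)"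
      by (rule mult_right_mono[OF Q fab])
    finally have key: "mi_fact \<gamma> * 2 ^ G \<le> Q * (mi_fact \<alpha> * mi_fact \<beta>)" .
    have "r * 2 ^ G = mi_fact \<gamma> * 2 ^ G / (Wa * Wb * Q)" unfolding r_def wg by simp
    also have "\<dots> \<le> Q * (mi_fact \<alpha> * mi_fact \<beta>) / (Wa * Wb * Q)"
      by (rule divide_right_mono[OF key]) (use Wa Wb Q0 in simp)
    also have "\<dots> = (mi_fact \<alpha> / Wa) * (mi_fact \<beta> / Wb)" using Q0 by (simp add: field_simps)
    finally have rb: "r * 2 ^ G \<le> (mi_fact \<alpha> / Wa) * (mi_fact \<beta> / Wb)" .
    have "(r * 2 ^ G) * ((norm (c \<alpha>))\<^sup>2 * (norm (d \<beta>))\<^sup>2) \<le> ((mi_fact \<alpha> / Wa) * (mi_fact \<beta> / Wb)) * ((norm (c \<alpha>))\<^sup>2 * (norm (d \<beta>))\<^sup>2)"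
      by (rule mult_right_mono[OF rb]) simp
    also have "\<dots> = hterm p c \<alpha> * hterm p d \<beta>" unfolding hterm_def Wa_def Wb_def by simp
    finally show "(r * 2 ^ G) * ((norm (c \<alpha>))\<^sup>2 * (norm (d (\<lambda>k. \<gamma> k - \<alpha> k)))\<^sup>2) \<le> hterm p c \<alpha> * hterm p d (\<lambda>k. \<gamma> k - \<alpha> k)"
      unfolding \<beta>_def .
  qed
  finally show ?thesis .
qed

lemma Dv_MI: "\<gamma> \<in> multi_indices \<Longrightarrow> \<alpha> \<in> Dv \<gamma> \<Longrightarrow> \<alpha> \<in> multi_indices"
  using MI_MIx Dv_MIx MIx_MI by blast

lemma diff_MI: "\<gamma> \<in> multi_indices \<Longrightarrow> (\<lambda>k. \<gamma> k - \<alpha> k) \<in> multi_indices"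
  using MI_MIx diff_MIx MIx_MI by blast

lemma hida_cp:
  assumes hc: "hida_dist c" and hd: "hida_dist d"
  shows "hida_dist (cp c d)"
proof -
  obtain p1 where p1: "hterm p1 c summable_on multi_indices" using hida_distD(2)[OF hc] by auto
  obtain p2 where p2: "hterm p2 d summable_on multi_indices" using hida_distD(2)[OF hd] by auto
  define p where "p = max p1 p2"
  have A: "hterm p c summable_on multi_indices" unfolding p_def by (rule hterm_summable_mono[OF p1]) simp
  have B: "hterm p d summable_on multi_indices" unfolding p_def by (rule hterm_summable_mono[OF p2]) simp
  show ?thesis
  proof (rule hida_distI[where p="Suc p"])
    show "\<alpha> \<notin> multi_indices \<Longrightarrow> cp c d \<alpha> = 0" for \<alpha> by (simp add: cp_def)
    show "hterm (Suc p) (cp c d) summable_on multi_indices"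
    proof (rule nonneg_bdd_above_summable_on)
      show "\<And>x. x \<in> multi_indices \<Longrightarrow> 0 \<le> hterm (Suc p) (cp c d) x" by (rule hterm_nonneg)
      show "bdd_above (sum (hterm (Suc p) (cp c d)) ` {F. F \<subseteq> multi_indices \<and> finite F})"
      proof (rule bdd_aboveI2)
        fix F assume "F \<in> {F. F \<subseteq> multi_indices \<and> finite F}"
        then have F: "F \<subseteq> multi_indices" "finite F" by auto
        define \<phi> where "\<phi> = (\<lambda>(\<gamma>::nat\<Rightarrow>nat, \<alpha>::nat\<Rightarrow>nat). (\<alpha>, (\<lambda>k. \<gamma> k - \<alpha> k)))"
        define S where "S = Sigma F Dv"
        have fS: "finite S" unfolding S_def using F finite_Dv by (intro finite_SigmaI) auto
        have injS: "inj_on \<phi> S"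
        proof (rule inj_onI)
          fix x y assume x: "x \<in> S" and y: "y \<in> S" and e: "\<phi> x = \<phi> y"
          obtain \<gamma> \<alpha> where xx: "x = (\<gamma>, \<alpha>)" by fastforce
          obtain \<gamma>' \<alpha>' where yy: "y = (\<gamma>', \<alpha>')" by fastforce
          have a: "\<alpha> = \<alpha>'" and b: "(\<lambda>k. \<gamma> k - \<alpha> k) = (\<lambda>k. \<gamma>' k - \<alpha>' k)"
            using e unfolding xx yy \<phi>_def by auto
          have "\<gamma> k = \<gamma>' k" for k
          proof -
            have "\<alpha> k \<le> \<gamma> k" "\<alpha>' k \<le> \<gamma>' k" using x y unfolding xx yy S_def Dv_def by auto
            moreover have "\<gamma> k - \<alpha> k = \<gamma>' k - \<alpha>' k" using fun_cong[OF b, of k] by simp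
            ultimately show ?thesis using a by simp
          qed
          then show "x = y" unfolding xx yy using a by auto
        qed
        define F1 where "F1 = fst ` (\<phi> ` S)"
        define F2 where "F2 = snd ` (\<phi> ` S)"
        have fF1: "finite F1" "finite F2" unfolding F1_def F2_def using fS by auto
        have F1MI: "F1 \<subseteq> multi_indices"
          unfolding F1_def \<phi>_def S_def using F Dv_MI by force
        have F2MI: "F2 \<subseteq> multi_indices"
          unfolding F2_def \<phi>_def S_def using F diff_MI by force
        have sub: "\<phi> ` S \<subseteq> F1 \<times> F2" unfolding F1_def F2_def by (rule subset_fst_snd)
        have "sum (hterm (Suc p) (cp c d)) F \<le> (\<Sum>\<gamma>\<in>F. \<Sum>\<alpha>\<in>Dv \<gamma>. hterm p c \<alpha> * hterm p d (\<lambda>k. \<gamma> k - \<alpha> k))"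
          by (rule sum_mono) (use F cp_term_bound in auto)
        also have "\<dots> = (\<Sum>(\<gamma>,\<alpha>)\<in>S. hterm p c \<alpha> * hterm p d (\<lambda>k. \<gamma> k - \<alpha> k))"
          unfolding S_def by (rule sum.Sigma) (use F finite_Dv in auto)
        also have "\<dots> = (\<Sum>y\<in>\<phi> ` S. hterm p c (fst y) * hterm p d (snd y))"
          by (subst sum.reindex[OF injS]) (auto simp: \<phi>_def intro!: sum.cong)
        also have "\<dots> \<le> (\<Sum>y\<in>F1 \<times> F2. hterm p c (fst y) * hterm p d (snd y))"
          by (rule sum_mono2) (use fF1 sub hterm_nonneg in \<open>auto intro: mult_nonneg_nonneg\<close>)
        also have "\<dots> = sum (hterm p c) F1 * sum (hterm p d) F2"
          by (simp add: sum_product sum.cartesian_product case_prod_unfold)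
        also have "\<dots> \<le> infsum (hterm p c) multi_indices * infsum (hterm p d) multi_indices"
        proof (rule mult_mono)
          show "sum (hterm p c) F1 \<le> infsum (hterm p c) multi_indices"
            by (rule finite_sum_le_infsum[OF A fF1(1) F1MI]) (rule hterm_nonneg)
          show "sum (hterm p d) F2 \<le> infsum (hterm p d) multi_indices"
            by (rule finite_sum_le_infsum[OF B fF1(2) F2MI]) (rule hterm_nonneg)
          show "0 \<le> infsum (hterm p c) multi_indices" by (rule infsum_nonneg) (rule hterm_nonneg)
          show "0 \<le> sum (hterm p d) F2" by (rule sum_nonneg) (rule hterm_nonneg)
        qed
        finally show "sum (hterm (Suc p) (cp c d)) F \<le> infsum (hterm p c) multi_indices * infsum (hterm p d) multi_indices" .
      qed
    qed
  qed
qed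


lemma mpow_add:
  fixes \<xi> :: "nat \<Rightarrow> complex"
  assumes "\<alpha> \<in> multi_indices" "\<beta> \<in> multi_indices"
  shows "mpow \<xi> (\<lambda>k. \<alpha> k + \<beta> k) = mpow \<xi> \<alpha> * mpow \<xi> \<beta>"
proof -
  obtain N1 where N1: "\<alpha> \<in> MIx N1" using MI_MIx assms by auto
  obtain N2 where N2: "\<beta> \<in> MIx N2" using MI_MIx assms by auto
  define N where "N = max N1 N2"
  have a: "\<alpha> \<in> MIx N" using N1 MIx_mono[of N1 N] unfolding N_def by auto
  have b: "\<beta> \<in> MIx N" using N2 MIx_mono[of N2 N] unfolding N_def by auto
  have ab: "(\<lambda>k. \<alpha> k + \<beta> k) \<in> MIx N" by (rule add_MIx[OF a b])
  show ?thesis unfolding mpow_MIx[OF a] mpow_MIx[OF b] mpow_MIx[OF ab]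
    by (simp add: power_add prod.distrib)
qed

lemma prod_norm_summable:
  fixes f g :: "'a \<Rightarrow> complex"
  assumes sf: "(\<lambda>x. norm (f x)) summable_on A" and sg: "(\<lambda>y. norm (g y)) summable_on B"
  shows "(\<lambda>z. norm (f (fst z) * g (snd z))) summable_on (A \<times> B)"
proof (rule nonneg_bdd_above_summable_on)
  show "\<And>x. x \<in> A \<times> B \<Longrightarrow> 0 \<le> norm (f (fst x) * g (snd x))" by simp
  show "bdd_above (sum (\<lambda>z. norm (f (fst z) * g (snd z))) ` {F. F \<subseteq> A \<times> B \<and> finite F})"
  proof (rule bdd_aboveI2)
    fix P assume "P \<in> {F. F \<subseteq> A \<times> B \<and> finite F}"
    then have P: "P \<subseteq> A \<times> B" "finite P" by auto
    have f12: "finite (fst ` P)" "finite (snd ` P)" using P by auto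
    have s12: "fst ` P \<subseteq> A" "snd ` P \<subseteq> B" using P by auto
    have "sum (\<lambda>z. norm (f (fst z) * g (snd z))) P \<le> sum (\<lambda>z. norm (f (fst z) * g (snd z))) (fst ` P \<times> snd ` P)"
      by (rule sum_mono2) (use f12 subset_fst_snd in auto)
    also have "\<dots> = sum (\<lambda>x. norm (f x)) (fst ` P) * sum (\<lambda>y. norm (g y)) (snd ` P)"
      by (simp add: sum_product sum.cartesian_product case_prod_unfold norm_mult)
    also have "\<dots> \<le> infsum (\<lambda>x. norm (f x)) A * infsum (\<lambda>y. norm (g y)) B"
    proof (rule mult_mono)
      show "sum (\<lambda>x. norm (f x)) (fst ` P) \<le> infsum (\<lambda>x. norm (f x)) A"
        by (rule finite_sum_le_infsum[OF sf f12(1) s12(1)]) simp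
      show "sum (\<lambda>y. norm (g y)) (snd ` P) \<le> infsum (\<lambda>y. norm (g y)) B"
        by (rule finite_sum_le_infsum[OF sg f12(2) s12(2)]) simp
      show "0 \<le> infsum (\<lambda>x. norm (f x)) A" by (rule infsum_nonneg) simp
      show "0 \<le> sum (\<lambda>y. norm (g y)) (snd ` P)" by (rule sum_nonneg) simp
    qed
    finally show "sum (\<lambda>z. norm (f (fst z) * g (snd z))) P \<le> infsum (\<lambda>x. norm (f x)) A * infsum (\<lambda>y. norm (g y)) B" .
  qed
qed

lemma S_cp:
  assumes hc: "hida_dist c" and hd: "hida_dist d" and \<xi>: "\<xi> \<in> Sc"
  shows "S_transform (cp c d) \<xi> = S_transform c \<xi> * S_transform d \<xi>"
proof -
  define f where "f \<alpha> = c \<alpha> * mpow \<xi> \<alpha>" for \<alpha>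
  define g where "g \<beta> = d \<beta> * mpow \<xi> \<beta>" for \<beta>
  define MI where "MI = multi_indices"
  have sf: "(\<lambda>x. norm (f x)) summable_on MI" unfolding f_def MI_def by (rule S_summable_norm[OF hc \<xi>])
  have sg: "(\<lambda>x. norm (g x)) summable_on MI" unfolding g_def MI_def by (rule S_summable_norm[OF hd \<xi>])
  have sh: "(\<lambda>z. f (fst z) * g (snd z)) summable_on (MI \<times> MI)"
    by (rule abs_summable_summable) (rule prod_norm_summable[OF sf sg])
  have sh': "(\<lambda>(x, y). f x * g y) summable_on (Sigma MI (\<lambda>_. MI))"
    using sh by (simp add: case_prod_unfold)
  have "S_transform c \<xi> * S_transform d \<xi> = infsum f MI * infsum g MI"
    unfolding S_transform_eq f_def g_def MI_def ..
  also have "\<dots> = infsum (\<lambda>x. f x * infsum g MI) MI" by (rule infsum_cmult_left'[symmetric])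
  also have "\<dots> = infsum (\<lambda>x. infsum (\<lambda>y. f x * g y) MI) MI"
    by (rule infsum_cong) (rule infsum_cmult_right'[symmetric])
  also have "\<dots> = infsum (\<lambda>(x, y). f x * g y) (Sigma MI (\<lambda>_. MI))"
    by (rule infsum_Sigma'_banach[OF sh'])
  also have "\<dots> = infsum (\<lambda>(\<gamma>, \<alpha>). c \<alpha> * d (\<lambda>k. \<gamma> k - \<alpha> k) * mpow \<xi> \<gamma>) (Sigma MI Dv)"
  proof (rule infsum_reindex_bij_witness[where j="\<lambda>(\<alpha>, \<beta>). ((\<lambda>k. \<alpha> k + \<beta> k), \<alpha>)"
          and i="\<lambda>(\<gamma>, \<alpha>). (\<alpha>, (\<lambda>k. \<gamma> k - \<alpha> k))"])
    fix a assume a: "a \<in> Sigma MI (\<lambda>_. MI)"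
    obtain \<alpha> \<beta> where ab: "a = (\<alpha>, \<beta>)" by fastforce
    have am: "\<alpha> \<in> MI" "\<beta> \<in> MI" using a ab by auto
    show "(\<lambda>(\<gamma>, \<alpha>). (\<alpha>, \<lambda>k. \<gamma> k - \<alpha> k)) ((\<lambda>(\<alpha>, \<beta>). (\<lambda>k. \<alpha> k + \<beta> k, \<alpha>)) a) = a"
      using ab by simp
    have "(\<lambda>k. \<alpha> k + \<beta> k) \<in> MI"
      using am add_MIx MI_MIx MIx_mono MIx_MI unfolding MI_def
      by (metis (no_types, lifting) max.cobounded1 max.cobounded2 subset_iff)
    then show "(\<lambda>(\<alpha>, \<beta>). (\<lambda>k. \<alpha> k + \<beta> k, \<alpha>)) a \<in> Sigma MI Dv"
      using ab by (auto simp: Dv_def)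
    show "(\<lambda>(\<gamma>, \<alpha>). c \<alpha> * d (\<lambda>k. \<gamma> k - \<alpha> k) * mpow \<xi> \<gamma>) ((\<lambda>(\<alpha>, \<beta>). (\<lambda>k. \<alpha> k + \<beta> k, \<alpha>)) a)
          = (\<lambda>(x, y). f x * g y) a"
      using ab am mpow_add[of \<alpha> \<beta> \<xi>] unfolding f_def g_def MI_def by simp
  next
    fix b assume b: "b \<in> Sigma MI Dv"
    obtain \<gamma> \<alpha> where ga: "b = (\<gamma>, \<alpha>)" by fastforce
    have gm: "\<gamma> \<in> MI" "\<alpha> \<in> Dv \<gamma>" using b ga by auto
    have le: "\<alpha> k \<le> \<gamma> k" for k using gm(2) by (simp add: Dv_def)
    show "(\<lambda>(\<alpha>, \<beta>). (\<lambda>k. \<alpha> k + \<beta> k, \<alpha>)) ((\<lambda>(\<gamma>, \<alpha>). (\<alpha>, \<lambda>k. \<gamma> k - \<alpha> k)) b) = b"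
      using ga le by (simp add: fun_eq_iff)
    show "(\<lambda>(\<gamma>, \<alpha>). (\<alpha>, \<lambda>k. \<gamma> k - \<alpha> k)) b \<in> Sigma MI (\<lambda>_. MI)"
      using ga gm Dv_MI diff_MI unfolding MI_def by auto
  qed
  also have "\<dots> = infsum (\<lambda>\<gamma>. infsum (\<lambda>\<alpha>. c \<alpha> * d (\<lambda>k. \<gamma> k - \<alpha> k) * mpow \<xi> \<gamma>) (Dv \<gamma>)) MI"
  proof (rule infsum_Sigma'_banach[symmetric])
    have "(\<lambda>(x, y). f x * g y) summable_on (Sigma MI (\<lambda>_. MI))
      \<longleftrightarrow> (\<lambda>(\<gamma>, \<alpha>). c \<alpha> * d (\<lambda>k. \<gamma> k - \<alpha> k) * mpow \<xi> \<gamma>) summable_on (Sigma MI Dv)"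
    proof (rule summable_on_reindex_bij_witness[where j="\<lambda>(\<alpha>, \<beta>). ((\<lambda>k. \<alpha> k + \<beta> k), \<alpha>)"
          and i="\<lambda>(\<gamma>, \<alpha>). (\<alpha>, (\<lambda>k. \<gamma> k - \<alpha> k))"])
      fix a assume a: "a \<in> Sigma MI (\<lambda>_. MI)"
      obtain \<alpha> \<beta> where ab: "a = (\<alpha>, \<beta>)" by fastforce
      have am: "\<alpha> \<in> MI" "\<beta> \<in> MI" using a ab by auto
      show "(\<lambda>(\<gamma>, \<alpha>). (\<alpha>, \<lambda>k. \<gamma> k - \<alpha> k)) ((\<lambda>(\<alpha>, \<beta>). (\<lambda>k. \<alpha> k + \<beta> k, \<alpha>)) a) = a"
        using ab by simp
      have "(\<lambda>k. \<alpha> k + \<beta> k) \<in> MI"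
        using am add_MIx MI_MIx MIx_mono MIx_MI unfolding MI_def
        by (metis (no_types, lifting) max.cobounded1 max.cobounded2 subset_iff)
      then show "(\<lambda>(\<alpha>, \<beta>). (\<lambda>k. \<alpha> k + \<beta> k, \<alpha>)) a \<in> Sigma MI Dv"
        using ab by (auto simp: Dv_def)
      show "(\<lambda>(\<gamma>, \<alpha>). c \<alpha> * d (\<lambda>k. \<gamma> k - \<alpha> k) * mpow \<xi> \<gamma>) ((\<lambda>(\<alpha>, \<beta>). (\<lambda>k. \<alpha> k + \<beta> k, \<alpha>)) a)
            = (\<lambda>(x, y). f x * g y) a"
        using ab am mpow_add[of \<alpha> \<beta> \<xi>] unfolding f_def g_def MI_def by simp
    next
      fix b assume b: "b \<in> Sigma MI Dv"
      obtain \<gamma> \<alpha> where ga: "b = (\<gamma>, \<alpha>)" by fastforce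
      have gm: "\<gamma> \<in> MI" "\<alpha> \<in> Dv \<gamma>" using b ga by auto
      have le: "\<alpha> k \<le> \<gamma> k" for k using gm(2) by (simp add: Dv_def)
      show "(\<lambda>(\<alpha>, \<beta>). (\<lambda>k. \<alpha> k + \<beta> k, \<alpha>)) ((\<lambda>(\<gamma>, \<alpha>). (\<alpha>, \<lambda>k. \<gamma> k - \<alpha> k)) b) = b"
        using ga le by (simp add: fun_eq_iff)
      show "(\<lambda>(\<gamma>, \<alpha>). (\<alpha>, \<lambda>k. \<gamma> k - \<alpha> k)) b \<in> Sigma MI (\<lambda>_. MI)"
        using ga gm Dv_MI diff_MI unfolding MI_def by auto
    qed
    then show "(\<lambda>(\<gamma>, \<alpha>). c \<alpha> * d (\<lambda>k. \<gamma> k - \<alpha> k) * mpow \<xi> \<gamma>) summable_on (Sigma MI Dv)"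
      using sh' by blast
  qed
  also have "\<dots> = infsum (\<lambda>\<gamma>. cp c d \<gamma> * mpow \<xi> \<gamma>) MI"
  proof (rule infsum_cong)
    fix \<gamma> assume "\<gamma> \<in> MI"
    then show "infsum (\<lambda>\<alpha>. c \<alpha> * d (\<lambda>k. \<gamma> k - \<alpha> k) * mpow \<xi> \<gamma>) (Dv \<gamma>) = cp c d \<gamma> * mpow \<xi> \<gamma>"
      using finite_Dv[of \<gamma>] unfolding cp_def MI_def by (simp add: sum_distrib_right)
  qed
  also have "\<dots> = S_transform (cp c d) \<xi>" unfolding S_transform_eq MI_def ..
  finally show ?thesis by simp
qed


definition deg :: "(nat \<Rightarrow> nat) \<Rightarrow> nat" where "deg \<alpha> = (\<Sum>k\<in>{k. \<alpha> k \<noteq> 0}. \<alpha> k)"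
definition EE :: "nat \<Rightarrow> (nat \<Rightarrow> nat) \<Rightarrow> nat" where "EE B \<alpha> = (\<Sum>k\<in>{k. \<alpha> k \<noteq> 0}. \<alpha> k * B ^ k)"

lemma deg_MIx: "\<alpha> \<in> MIx N \<Longrightarrow> deg \<alpha> = dg N \<alpha>"
  unfolding deg_def dg_def by (rule sum.mono_neutral_left) (use MIx_sub in auto)

lemma EE_MIx: "\<alpha> \<in> MIx N \<Longrightarrow> EE B \<alpha> = Ed B N \<alpha>"
  unfolding EE_def Ed_def by (rule sum.mono_neutral_left) (use MIx_sub in auto)

lemma MIx_common:
  assumes "\<alpha> \<in> multi_indices" "\<beta> \<in> multi_indices"
  obtains N where "\<alpha> \<in> MIx N" "\<beta> \<in> MIx N"
proof -
  obtain N1 where N1: "\<alpha> \<in> MIx N1" using MI_MIx assms by auto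
  obtain N2 where N2: "\<beta> \<in> MIx N2" using MI_MIx assms by auto
  have "\<alpha> \<in> MIx (max N1 N2)" using N1 MIx_mono[of N1 "max N1 N2"] by auto
  moreover have "\<beta> \<in> MIx (max N1 N2)" using N2 MIx_mono[of N2 "max N1 N2"] by auto
  ultimately show ?thesis using that by blast
qed

lemma cp_nonzero:
  assumes c0: "\<And>\<alpha>. \<alpha> \<notin> multi_indices \<Longrightarrow> c \<alpha> = 0" and d0: "\<And>\<alpha>. \<alpha> \<notin> multi_indices \<Longrightarrow> d \<alpha> = 0"
    and cn: "c \<noteq> (\<lambda>_. 0)" and dn: "d \<noteq> (\<lambda>_. 0)"
  shows "cp c d \<noteq> (\<lambda>_. 0)"
proof -
  define P1 where "P1 n = (\<exists>\<alpha>\<in>multi_indices. c \<alpha> \<noteq> 0 \<and> deg \<alpha> = n)" for n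
  define P2 where "P2 n = (\<exists>\<alpha>\<in>multi_indices. d \<alpha> \<noteq> 0 \<and> deg \<alpha> = n)" for n
  obtain a where a: "c a \<noteq> 0" using cn by auto
  obtain b where b: "d b \<noteq> 0" using dn by auto
  have "P1 (deg a)" unfolding P1_def using a c0 by blast
  then have P1d: "P1 (Least P1)" by (rule LeastI)
  have "P2 (deg b)" unfolding P2_def using b d0 by blast
  then have P2d: "P2 (Least P2)" by (rule LeastI)
  define d1 where "d1 = Least P1"
  define d2 where "d2 = Least P2"
  define B where "B = Suc (d1 + d2)"
  define Q1 where "Q1 e = (\<exists>\<alpha>\<in>multi_indices. c \<alpha> \<noteq> 0 \<and> deg \<alpha> = d1 \<and> EE B \<alpha> = e)" for e
  define Q2 where "Q2 e = (\<exists>\<alpha>\<in>multi_indices. d \<alpha> \<noteq> 0 \<and> deg \<alpha> = d2 \<and> EE B \<alpha> = e)" for e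
  obtain a1 where a1: "a1 \<in> multi_indices" "c a1 \<noteq> 0" "deg a1 = d1" using P1d unfolding P1_def d1_def by auto
  obtain b1 where b1: "b1 \<in> multi_indices" "d b1 \<noteq> 0" "deg b1 = d2" using P2d unfolding P2_def d2_def by auto
  have "Q1 (EE B a1)" unfolding Q1_def using a1 by blast
  then have "Q1 (Least Q1)" by (rule LeastI)
  then obtain \<alpha>0 where A0: "\<alpha>0 \<in> multi_indices" "c \<alpha>0 \<noteq> 0" "deg \<alpha>0 = d1" "EE B \<alpha>0 = Least Q1"
    unfolding Q1_def by auto
  have "Q2 (EE B b1)" unfolding Q2_def using b1 by blast
  then have "Q2 (Least Q2)" by (rule LeastI)
  then obtain \<beta>0 where B0: "\<beta>0 \<in> multi_indices" "d \<beta>0 \<noteq> 0" "deg \<beta>0 = d2" "EE B \<beta>0 = Least Q2"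
    unfolding Q2_def by auto
  obtain N where N: "\<alpha>0 \<in> MIx N" "\<beta>0 \<in> MIx N" using MIx_common[OF A0(1) B0(1)] by blast
  define \<gamma> where "\<gamma> = (\<lambda>k. \<alpha>0 k + \<beta>0 k)"
  have gN: "\<gamma> \<in> MIx N" unfolding \<gamma>_def by (rule add_MIx[OF N])
  have gMI: "\<gamma> \<in> multi_indices" using gN MIx_MI by auto
  have a0D: "\<alpha>0 \<in> Dv \<gamma>" unfolding \<gamma>_def Dv_def by auto
  have gb: "(\<lambda>k. \<gamma> k - \<alpha>0 k) = \<beta>0" unfolding \<gamma>_def by auto
  have zero: "c \<alpha> * d (\<lambda>k. \<gamma> k - \<alpha> k) = 0" if aD: "\<alpha> \<in> Dv \<gamma>" and ne: "\<alpha> \<noteq> \<alpha>0" for \<alpha>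
  proof (rule ccontr)
    assume nz: "c \<alpha> * d (\<lambda>k. \<gamma> k - \<alpha> k) \<noteq> 0"
    define \<beta> where "\<beta> = (\<lambda>k. \<gamma> k - \<alpha> k)"
    have aN: "\<alpha> \<in> MIx N" by (rule Dv_MIx[OF gN aD])
    have bN: "\<beta> \<in> MIx N" unfolding \<beta>_def by (rule diff_MIx[OF gN])
    have aM: "\<alpha> \<in> multi_indices" "\<beta> \<in> multi_indices" using aN bN MIx_MI by auto
    have ca: "c \<alpha> \<noteq> 0" "d \<beta> \<noteq> 0" using nz unfolding \<beta>_def by auto
    have gk: "\<gamma> k = \<alpha> k + \<beta> k" for k using aD unfolding \<beta>_def Dv_def by auto
    have dga: "dg N \<gamma> = dg N \<alpha> + dg N \<beta>" unfolding dg_def by (simp add: gk sum.distrib)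
    have dgg: "dg N \<gamma> = d1 + d2"
    proof -
      have "dg N \<gamma> = dg N \<alpha>0 + dg N \<beta>0" unfolding dg_def \<gamma>_def by (simp add: sum.distrib)
      then show ?thesis using A0(3) B0(3) deg_MIx[OF N(1)] deg_MIx[OF N(2)] by simp
    qed
    have "P1 (deg \<alpha>)" unfolding P1_def using aM ca by blast
    then have l1: "d1 \<le> deg \<alpha>" unfolding d1_def by (rule Least_le)
    have "P2 (deg \<beta>)" unfolding P2_def using aM ca by blast
    then have l2: "d2 \<le> deg \<beta>" unfolding d2_def by (rule Least_le)
    have da: "deg \<alpha> = d1" "deg \<beta> = d2" using l1 l2 dga dgg deg_MIx[OF aN] deg_MIx[OF bN] by auto
    have "Q1 (EE B \<alpha>)" unfolding Q1_def using aM ca da by blast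
    then have e1: "Least Q1 \<le> EE B \<alpha>" by (rule Least_le)
    have "Q2 (EE B \<beta>)" unfolding Q2_def using aM ca da by blast
    then have e2: "Least Q2 \<le> EE B \<beta>" by (rule Least_le)
    have Ega: "Ed B N \<gamma> = Ed B N \<alpha> + Ed B N \<beta>" unfolding Ed_def by (simp add: gk sum.distrib algebra_simps)
    have Egg: "Ed B N \<gamma> = Ed B N \<alpha>0 + Ed B N \<beta>0" unfolding Ed_def \<gamma>_def by (simp add: sum.distrib algebra_simps)
    have "EE B \<alpha> = EE B \<alpha>0"
      using e1 e2 Ega Egg A0(4) B0(4) EE_MIx[OF aN] EE_MIx[OF bN] EE_MIx[OF N(1)] EE_MIx[OF N(2)] by auto
    then have EEq: "(\<Sum>k<N. \<alpha> k * B ^ k) = (\<Sum>k<N. \<alpha>0 k * B ^ k)"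
      using EE_MIx[OF aN] EE_MIx[OF N(1)] by (simp add: Ed_def)
    have "\<forall>k<N. \<alpha> k = \<alpha>0 k"
    proof (rule digits_inj[OF _ _ EEq])
      show "\<forall>k<N. \<alpha> k < B" using dg_ge[of _ N \<alpha>] da deg_MIx[OF aN] unfolding B_def by (auto simp: less_Suc_eq_le intro: le_add1 order_trans)
      show "\<forall>k<N. \<alpha>0 k < B" using dg_ge[of _ N \<alpha>0] A0(3) deg_MIx[OF N(1)] unfolding B_def by (auto simp: less_Suc_eq_le intro: le_add1 order_trans)
    qed
    moreover have "\<forall>k\<ge>N. \<alpha> k = \<alpha>0 k" using aN N(1) unfolding MIx_def by auto
    ultimately have "\<alpha> = \<alpha>0" by (metis not_less ext)
    then show False using ne by simp
  qed
  have "cp c d \<gamma> = (\<Sum>\<alpha>\<in>Dv \<gamma>. c \<alpha> * d (\<lambda>k. \<gamma> k - \<alpha> k))" using gMI by (simp add: cp_def)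
  also have "\<dots> = c \<alpha>0 * d (\<lambda>k. \<gamma> k - \<alpha>0 k) + (\<Sum>\<alpha>\<in>Dv \<gamma> - {\<alpha>0}. c \<alpha> * d (\<lambda>k. \<gamma> k - \<alpha> k))"
    by (rule sum.remove[OF finite_Dv[OF gMI] a0D])
  also have "(\<Sum>\<alpha>\<in>Dv \<gamma> - {\<alpha>0}. c \<alpha> * d (\<lambda>k. \<gamma> k - \<alpha> k)) = 0"
    by (rule sum.neutral) (use zero in auto)
  also have "c \<alpha>0 * d (\<lambda>k. \<gamma> k - \<alpha>0 k) + 0 = c \<alpha>0 * d \<beta>0" using gb by simp
  finally have "cp c d \<gamma> \<noteq> 0" using A0(2) B0(2) by simp
  then show ?thesis by (metis)
qed

lemma wick_eq:
  assumes hc: "hida_dist c" and hd: "hida_dist d"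
  shows "wick c d = cp c d"
  unfolding wick_def
proof (rule the_equality)
  show "hida_dist (cp c d) \<and> (\<forall>\<xi>\<in>Sc. S_transform (cp c d) \<xi> = S_transform c \<xi> * S_transform d \<xi>)"
    using hida_cp[OF hc hd] S_cp[OF hc hd] by blast
  fix e assume e: "hida_dist e \<and> (\<forall>\<xi>\<in>Sc. S_transform e \<xi> = S_transform c \<xi> * S_transform d \<xi>)"
  have hcp: "hida_dist (cp c d)" by (rule hida_cp[OF hc hd])
  have hdiff: "hida_dist (\<lambda>\<alpha>. e \<alpha> - cp c d \<alpha>)" using hida_diff e hcp by blast
  have "\<forall>\<xi>\<in>Sc. S_transform (\<lambda>\<alpha>. e \<alpha> - cp c d \<alpha>) \<xi> = 0"
    using S_diff[OF _ hcp] e S_cp[OF hc hd] by simp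
  then have "e \<alpha> - cp c d \<alpha> = 0" for \<alpha> by (rule S_inj[OF hdiff])
  then show "e = cp c d" by auto
qed


lemma infsum_MIx_tendsto:
  fixes F :: "(nat \<Rightarrow> nat) \<Rightarrow> complex"
  assumes sF: "(\<lambda>\<alpha>. norm (F \<alpha>)) summable_on multi_indices"
  shows "(\<lambda>N. infsum F (MIx N)) \<longlonglongrightarrow> infsum F multi_indices"
proof (rule LIMSEQ_I)
  fix r :: real assume r: "r > 0"
  define nF where "nF = (\<lambda>\<alpha>. norm (F \<alpha>))"
  have snF: "nF summable_on multi_indices" using sF unfolding nF_def .
  obtain P where P: "finite P" "P \<subseteq> multi_indices" "dist (sum nF P) (infsum nF multi_indices) \<le> r / 2"
    using infsum_finite_approximation[OF snF, of "r/2"] r by auto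
  obtain N0 where N0: "P \<subseteq> MIx N0" using finite_MIx[OF P(1,2)] by auto
  have sFF: "F summable_on multi_indices" by (rule abs_summable_summable) (rule sF)
  have "norm (infsum F (MIx N) - infsum F multi_indices) < r" if N: "N \<ge> N0" for N
  proof -
    have sub: "MIx N \<subseteq> multi_indices" by (rule MIx_MI)
    have s1: "F summable_on MIx N" by (rule summable_on_subset_banach[OF sFF sub])
    have s2: "nF summable_on MIx N" by (rule summable_on_subset_banach[OF snF sub])
    have s3: "nF summable_on (multi_indices - MIx N)" by (rule summable_on_subset_banach[OF snF]) auto
    have "norm (infsum F (MIx N) - infsum F multi_indices) = norm (infsum F (multi_indices - MIx N))"
      by (simp add: infsum_Diff[OF sFF s1 sub] norm_minus_commute)
    also have "\<dots> \<le> infsum nF (multi_indices - MIx N)"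
      unfolding nF_def by (rule norm_infsum_bound) (use s3 in \<open>simp add: nF_def\<close>)
    also have "\<dots> = infsum nF multi_indices - infsum nF (MIx N)" by (rule infsum_Diff[OF snF s2 sub])
    also have "\<dots> \<le> infsum nF multi_indices - sum nF P"
    proof -
      have "P \<subseteq> MIx N" using N0 MIx_mono[OF N] by auto
      then have "sum nF P \<le> infsum nF (MIx N)"
        by (intro finite_sum_le_infsum[OF s2 P(1)]) (auto simp: nF_def)
      then show ?thesis by simp
    qed
    also have "\<dots> \<le> r / 2"
    proof -
      have "\<bar>sum nF P - infsum nF multi_indices\<bar> \<le> r / 2" using P(3) unfolding dist_real_def .
      then show ?thesis by linarith
    qed
    also have "\<dots> < r" using r by simp
    finally show ?thesis .
  qed
  then show "\<exists>no. \<forall>n\<ge>no. norm (infsum F (MIx n) - infsum F multi_indices) < r" by blast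
qed

lemma S_trunc:
  fixes \<eta> :: "nat \<Rightarrow> complex"
  shows "S_transform c (\<lambda>k. if k < N then \<eta> k else 0) = infsum (\<lambda>\<alpha>. c \<alpha> * mpow \<eta> \<alpha>) (MIx N)"
  unfolding S_transform_eq
proof (rule infsum_cong_neutral)
  show "\<And>x. x \<in> MIx N - multi_indices \<Longrightarrow> c x * mpow \<eta> x = 0" using MIx_MI by auto
  show "c x * mpow (\<lambda>k. if k < N then \<eta> k else 0) x = 0" if "x \<in> multi_indices - MIx N" for x
    using that by (subst mpow_outside[of _ N]) auto
  show "c x * mpow (\<lambda>k. if k < N then \<eta> k else 0) x = c x * mpow \<eta> x" if "x \<in> multi_indices \<inter> MIx N" for x
  proof -
    have x: "x \<in> MIx N" using that by auto
    have "(\<Prod>k<N. (if k < N then \<eta> k else 0) ^ x k) = (\<Prod>k<N. \<eta> k ^ x k)"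
      by (rule prod.cong) auto
    then show ?thesis unfolding mpow_MIx[OF x] by simp
  qed
qed

lemma S_limit:
  assumes hc: "hida_dist c" and \<eta>: "\<eta> \<in> Sc"
  shows "(\<lambda>N. S_transform c (\<lambda>k. if k < N then \<eta> k else 0)) \<longlonglongrightarrow> S_transform c \<eta>"
  unfolding S_trunc S_transform_eq by (rule infsum_MIx_tendsto[OF S_summable_norm[OF hc \<eta>]])

definition gf :: "nat \<Rightarrow> complex" where
  "gf j = (if even j then of_real (1 / (2 ^ (j div 2) * fact (j div 2))) else 0)"

lemma evens_has_sum:
  fixes h :: "nat \<Rightarrow> 'a::{comm_monoid_add, topological_space}"
  assumes "(h has_sum S) UNIV"
  shows "((\<lambda>j. if even j then h (j div 2) else 0) has_sum S) UNIV"
proof -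
  have inj: "inj_on (\<lambda>m::nat. 2 * m) UNIV" by (auto simp: inj_on_def)
  have "((\<lambda>j. if even j then h (j div 2) else 0) \<circ> (\<lambda>m. 2 * m) has_sum S) UNIV"
    using assms by (simp add: o_def)
  then have "((\<lambda>j. if even j then h (j div 2) else 0) has_sum S) (range (\<lambda>m. 2 * m))"
    using has_sum_reindex[OF inj] by blast
  moreover have "((\<lambda>j. if even j then h (j div 2) else 0) has_sum S) (range (\<lambda>m. 2 * m))
      \<longleftrightarrow> ((\<lambda>j. if even j then h (j div 2) else 0) has_sum S) UNIV"
    by (rule has_sum_cong_neutral) (auto elim!: evenE)
  ultimately show ?thesis by blast
qed

lemma gf_term: "gf j * z ^ j = (if even j then (z\<^sup>2 / 2) ^ (j div 2) /\<^sub>R fact (j div 2) else 0)"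
proof (cases "even j")
  case True
  then obtain m where j: "j = 2 * m" by (auto elim!: evenE)
  have "z ^ (2 * m) = (z\<^sup>2) ^ m" by (simp add: power_mult)
  then show ?thesis using j
    by (simp add: gf_def scaleR_conv_of_real power_divide field_simps)
qed (simp add: gf_def)

lemma gauss1:
  fixes z :: complex
  shows "((\<lambda>j. gf j * z ^ j) has_sum exp (z\<^sup>2 / 2)) UNIV"
    and "(\<lambda>j. norm (gf j * z ^ j)) summable_on UNIV"
proof -
  define h where "h = (\<lambda>m. (z\<^sup>2 / 2) ^ m /\<^sub>R fact m)"
  have hs: "(h has_sum exp (z\<^sup>2 / 2)) UNIV"
    unfolding h_def by (rule norm_summable_imp_has_sum[OF summable_norm_exp exp_converges])
  show "((\<lambda>j. gf j * z ^ j) has_sum exp (z\<^sup>2 / 2)) UNIV"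
  proof -
    have "(\<lambda>j. gf j * z ^ j) = (\<lambda>j. if even j then h (j div 2) else 0)"
      by (simp add: gf_term h_def fun_eq_iff)
    then show ?thesis using evens_has_sum[OF hs] by simp
  qed
  have "((\<lambda>m. norm (h m)) has_sum suminf (\<lambda>m. norm (h m))) UNIV"
  proof (rule sums_nonneg_imp_has_sum)
    have "summable (\<lambda>m. norm (h m))" unfolding h_def by (rule summable_norm_exp)
    then show "(\<lambda>m. norm (h m)) sums suminf (\<lambda>m. norm (h m))" by (rule summable_sums)
  qed simp
  then have "((\<lambda>j. if even j then norm (h (j div 2)) else 0) has_sum suminf (\<lambda>m. norm (h m))) UNIV"
    by (rule evens_has_sum)
  moreover have "(\<lambda>j. if even j then norm (h (j div 2)) else 0) = (\<lambda>j. norm (gf j * z ^ j))"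
    by (auto simp: gf_term h_def fun_eq_iff)
  ultimately show "(\<lambda>j. norm (gf j * z ^ j)) summable_on UNIV"
    using has_sum_imp_summable by metis
qed

definition gauss :: "(nat \<Rightarrow> nat) \<Rightarrow> complex" where
  "gauss \<alpha> = (if \<alpha> \<in> multi_indices then (\<Prod>k\<in>{k. \<alpha> k \<noteq> 0}. gf (\<alpha> k)) else 0)"

lemma gf0: "gf 0 = 1" by (simp add: gf_def)

lemma S_gauss_trunc:
  fixes \<eta> :: "nat \<Rightarrow> complex"
  shows "S_transform gauss (\<lambda>k. if k < N then \<eta> k else 0) = exp ((\<Sum>k<N. \<eta> k * \<eta> k) / 2)"
proof -
  have "S_transform gauss (\<lambda>k. if k < N then \<eta> k else 0) = infsum (\<lambda>\<alpha>. gauss \<alpha> * mpow \<eta> \<alpha>) (MIx N)"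
    by (rule S_trunc)
  also have "\<dots> = infsum (\<lambda>\<alpha>. \<Prod>k<N. gf (\<alpha> k) * \<eta> k ^ \<alpha> k) (MIx N)"
  proof (rule infsum_cong)
    fix \<alpha> assume a: "\<alpha> \<in> MIx N"
    then have "\<alpha> \<in> multi_indices" using MIx_MI by auto
    then show "gauss \<alpha> * mpow \<eta> \<alpha> = (\<Prod>k<N. gf (\<alpha> k) * \<eta> k ^ \<alpha> k)"
      unfolding gauss_def mpow_MIx[OF a] prod_supp_MIx[OF a, where h="\<lambda>k j. gf j", OF gf0]
      by (simp add: prod.distrib)
  qed
  also have "\<dots> = (\<Prod>k<N. infsum (\<lambda>j. gf j * \<eta> k ^ j) UNIV)"
    by (rule prod_infsum_MIx) (rule gauss1(2))
  also have "\<dots> = (\<Prod>k<N. exp ((\<eta> k)\<^sup>2 / 2))"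
    by (intro prod.cong refl infsumI gauss1(1))
  also have "\<dots> = exp (\<Sum>k<N. (\<eta> k)\<^sup>2 / 2)" by (simp add: exp_sum)
  also have "\<dots> = exp ((\<Sum>k<N. \<eta> k * \<eta> k) / 2)" by (simp add: sum_divide_distrib power2_eq_square)
  finally show ?thesis .
qed

lemma S_gauss:
  assumes \<eta>: "\<eta> \<in> Sc" and hg: "hida_dist gauss"
  shows "S_transform gauss \<eta> = exp (bil \<eta> \<eta> / 2)"
proof -
  have sn: "summable (\<lambda>k. norm (\<eta> k * \<eta> k))"
  proof -
    have "summable (\<lambda>k. (norm (\<eta> k))\<^sup>2 * (2 * real k + 2) ^ (2 * 0))" using \<eta> unfolding Sc_def by blast
    then show ?thesis by (simp add: norm_mult power2_eq_square)
  qed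
  have s: "summable (\<lambda>k. \<eta> k * \<eta> k)" by (rule summable_norm_cancel[OF sn])
  have "(\<lambda>N. exp ((\<Sum>k<N. \<eta> k * \<eta> k) / 2)) \<longlonglongrightarrow> exp (bil \<eta> \<eta> / 2)"
    unfolding bil_def by (intro tendsto_exp tendsto_divide tendsto_const summable_LIMSEQ[OF s]) simp
  moreover have "(\<lambda>N. exp ((\<Sum>k<N. \<eta> k * \<eta> k) / 2)) \<longlonglongrightarrow> S_transform gauss \<eta>"
    using S_limit[OF hg \<eta>] by (simp add: S_gauss_trunc)
  ultimately show ?thesis using LIMSEQ_unique by blast
qed


lemma gf_sq_le: "fact j * (norm (gf j))\<^sup>2 \<le> 1"
proof (cases "even j")
  case True
  then obtain m where j: "j = 2 * m" by (auto elim!: evenE)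
  have f2: "(fact (2 * m) :: real) \<le> (2 ^ m * fact m) ^ 2"
  proof -
    have "(fact (2 * m) :: real) = fact (m + m)" by (simp add: mult_2)
    also have "\<dots> \<le> 2 ^ (m + m) * fact m * fact m" by (rule fact_add_le)
    also have "\<dots> = (2 ^ m * fact m) ^ 2" by (simp add: power_add power2_eq_square mult_ac)
    finally show ?thesis .
  qed
  have pos: "(2 ^ m * fact m :: real) > 0" by simp
  have e: "gf j = complex_of_real (1 / (2 ^ m * fact m))" using j by (simp add: gf_def)
  have "norm (gf j) = 1 / (2 ^ m * fact m)" unfolding e norm_of_real by simp
  then have "fact j * (norm (gf j))\<^sup>2 = fact (2 * m) / (2 ^ m * fact m) ^ 2"
    unfolding j by (simp add: power_divide)
  also have "\<dots> \<le> 1" using f2 pos by simp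
  finally show ?thesis .
qed (simp add: gf_def)

definition rr :: "nat \<Rightarrow> real" where "rr k = inverse ((2 * real k + 2) ^ 2)"

lemma rr_summable: "summable rr"
proof -
  have "summable (\<lambda>n. inverse (real n ^ 2))" using inverse_power_summable[of 2] by simp
  then have s: "summable (\<lambda>n. inverse (real (Suc n) ^ 2))"
    by (rule summable_Suc_iff[where f="\<lambda>n. inverse (real n ^ 2 :: real)", THEN iffD2])
  show ?thesis
  proof (rule summable_comparison_test[OF _ s])
    show "\<exists>N. \<forall>n\<ge>N. norm (rr n) \<le> inverse (real (Suc n) ^ 2)"
    proof (intro exI allI impI)
      fix n :: nat
      have "real (Suc n) ^ 2 \<le> (2 * real n + 2) ^ 2" by (intro power_mono) auto
      then show "norm (rr n) \<le> inverse (real (Suc n) ^ 2)"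
        unfolding rr_def by (simp add: le_imp_inverse_le)
    qed
  qed
qed

lemma rr_bounds: "rr k \<ge> 0" "rr k \<le> 1/4"
proof -
  show "rr k \<ge> 0" by (simp add: rr_def)
  have "(2::real) ^ 2 \<le> (2 * real k + 2) ^ 2" by (intro power_mono) auto
  then have "inverse ((2 * real k + 2) ^ 2) \<le> inverse ((2::real) ^ 2)" by (intro le_imp_inverse_le) auto
  then show "rr k \<le> 1/4" unfolding rr_def by simp
qed

lemma geom_bound:
  fixes r :: real assumes "0 \<le> r" "r \<le> 1/4"
  shows "1 / (1 - r) \<le> exp (2 * r)"
proof -
  have "1 / (1 - r) \<le> 1 + 2 * r"
  proof -
    have "r * (1 - 2 * r) \<ge> 0" using assms by simp
    moreover have "(1 + 2 * r) * (1 - r) = 1 + r * (1 - 2 * r)" by (simp add: algebra_simps)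
    ultimately have "1 \<le> (1 + 2 * r) * (1 - r)" by linarith
    moreover have "1 - r > 0" using assms by simp
    ultimately show ?thesis by (simp add: divide_le_eq)
  qed
  also have "\<dots> \<le> exp (2 * r)" by (rule exp_ge_add_one_self_aux) (use assms in simp)
  finally show ?thesis .
qed

lemma geom_has_sum: "((\<lambda>j. rr k ^ j) has_sum (1 / (1 - rr k))) UNIV"
proof (rule sums_nonneg_imp_has_sum)
  show "(\<lambda>j. rr k ^ j) sums (1 / (1 - rr k))"
    by (rule geometric_sums) (use rr_bounds[of k] in simp)
qed (use rr_bounds[of k] in simp)

lemma hida_gauss: "hida_dist gauss"
proof (rule hida_distI[where p=1])
  show "\<alpha> \<notin> multi_indices \<Longrightarrow> gauss \<alpha> = 0" for \<alpha> by (simp add: gauss_def)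
  have G: "(\<lambda>\<alpha>. \<Prod>k\<in>{k. \<alpha> k \<noteq> 0}. rr k ^ \<alpha> k) summable_on multi_indices"
  proof (rule summable_MI_prod[where C="exp (2 * suminf rr)"])
    show "\<And>k. (\<lambda>j. rr k ^ j) summable_on UNIV" using geom_has_sum has_sum_imp_summable by blast
    show "0 \<le> rr k ^ j" for k j using rr_bounds by simp
    show "rr k ^ 0 = 1" for k by simp
    fix N
    have "(\<Prod>k<N. infsum (\<lambda>j. rr k ^ j) UNIV) = (\<Prod>k<N. 1 / (1 - rr k))"
      by (intro prod.cong refl infsumI geom_has_sum)
    also have "\<dots> \<le> (\<Prod>k<N. exp (2 * rr k))"
    proof (rule prod_mono)
      fix k
      have r: "0 \<le> rr k" "rr k \<le> 1/4" by (rule rr_bounds)+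
      then have "1 - rr k > 0" by simp
      then show "0 \<le> 1 / (1 - rr k) \<and> 1 / (1 - rr k) \<le> exp (2 * rr k)" using geom_bound[OF r] by simp
    qed
    also have "\<dots> = exp (2 * (\<Sum>k<N. rr k))" by (simp add: exp_sum sum_distrib_left)
    also have "\<dots> \<le> exp (2 * suminf rr)"
      using sum_le_suminf[OF rr_summable, of "{..<N}"] rr_bounds by auto
    finally show "(\<Prod>k<N. infsum (\<lambda>j. rr k ^ j) UNIV) \<le> exp (2 * suminf rr)" .
  qed
  show "hterm 1 gauss summable_on multi_indices"
  proof (rule summable_on_comparison_test[OF G])
    fix \<alpha> assume a: "\<alpha> \<in> multi_indices"
    obtain N where N: "\<alpha> \<in> MIx N" using MI_MIx a by auto
    have "hterm 1 gauss \<alpha> = mi_fact \<alpha> * (norm (\<Prod>k<N. gf (\<alpha> k)))\<^sup>2 / mi_weight \<alpha> ^ 2"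
      unfolding hterm_def gauss_def using a prod_supp_MIx[OF N, where h="\<lambda>k j. gf j", OF gf0] by simp
    also have "\<dots> = (\<Prod>k<N. fact (\<alpha> k) * (norm (gf (\<alpha> k)))\<^sup>2 / ((2 * real k + 2) ^ \<alpha> k) ^ 2)"
      unfolding mi_fact_MIx[OF N] mi_weight_MIx[OF N]
      by (simp add: prod_norm[symmetric] prod_power_distrib[symmetric] prod_dividef prod.distrib)
    also have "\<dots> \<le> (\<Prod>k<N. rr k ^ \<alpha> k)"
    proof (rule prod_mono)
      fix k
      have w: "((2 * real k + 2) ^ \<alpha> k) ^ 2 > 0" by simp
      have "fact (\<alpha> k) * (norm (gf (\<alpha> k)))\<^sup>2 / ((2 * real k + 2) ^ \<alpha> k) ^ 2 \<le> 1 / ((2 * real k + 2) ^ \<alpha> k) ^ 2"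
        by (rule divide_right_mono[OF gf_sq_le]) simp
      also have "\<dots> = rr k ^ \<alpha> k" unfolding rr_def
        by (simp add: power_inverse[symmetric] power_mult[symmetric] mult.commute divide_inverse)
      finally show "0 \<le> fact (\<alpha> k) * (norm (gf (\<alpha> k)))\<^sup>2 / ((2 * real k + 2) ^ \<alpha> k) ^ 2 \<and>
            fact (\<alpha> k) * (norm (gf (\<alpha> k)))\<^sup>2 / ((2 * real k + 2) ^ \<alpha> k) ^ 2 \<le> rr k ^ \<alpha> k" by simp
    qed
    also have "\<dots> = (\<Prod>k\<in>{k. \<alpha> k \<noteq> 0}. rr k ^ \<alpha> k)"
      by (rule prod_supp_MIx[OF N, symmetric]) simp
    finally show "hterm 1 gauss \<alpha> \<le> (\<Prod>k\<in>{k. \<alpha> k \<noteq> 0}. rr k ^ \<alpha> k)" .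
  qed (rule hterm_nonneg)
qed

lemma bil_i:
  assumes "\<xi> \<in> Sc"
  shows "bil (\<lambda>k. \<i> * \<xi> k) (\<lambda>k. \<i> * \<xi> k) = - bil \<xi> \<xi>"
proof -
  have sn: "summable (\<lambda>k. norm (\<xi> k * \<xi> k))"
  proof -
    have "summable (\<lambda>k. (norm (\<xi> k))\<^sup>2 * (2 * real k + 2) ^ (2 * 0))" using assms unfolding Sc_def by blast
    then show ?thesis by (simp add: norm_mult power2_eq_square)
  qed
  have s: "summable (\<lambda>k. \<xi> k * \<xi> k)" by (rule summable_norm_cancel[OF sn])
  have "bil (\<lambda>k. \<i> * \<xi> k) (\<lambda>k. \<i> * \<xi> k) = (\<Sum>k. - (\<xi> k * \<xi> k))"
    unfolding bil_def by (simp add: algebra_simps)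
  also have "\<dots> = - bil \<xi> \<xi>" unfolding bil_def by (rule suminf_minus[OF s])
  finally show ?thesis .
qed

lemma conv_eq:
  assumes hc: "hida_dist c" and hd: "hida_dist d"
  shows "conv c d = cp gauss (cp c d)"
  unfolding conv_def
proof (rule the_equality)
  have hcd: "hida_dist (cp c d)" by (rule hida_cp[OF hc hd])
  show "hida_dist (cp gauss (cp c d)) \<and>
        (\<forall>\<xi>\<in>Sc. T_transform (cp gauss (cp c d)) \<xi> = T_transform c \<xi> * T_transform d \<xi>)"
  proof
    show "hida_dist (cp gauss (cp c d))" by (rule hida_cp[OF hida_gauss hcd])
    show "\<forall>\<xi>\<in>Sc. T_transform (cp gauss (cp c d)) \<xi> = T_transform c \<xi> * T_transform d \<xi>"
    proof
      fix \<xi> assume \<xi>: "\<xi> \<in> Sc"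
      define \<eta> where "\<eta> = (\<lambda>k. \<i> * \<xi> k)"
      have \<eta>: "\<eta> \<in> Sc" unfolding \<eta>_def by (rule Sc_scale[OF \<xi>])
      define E where "E = exp (- bil \<xi> \<xi> / 2)"
      have Sg: "S_transform gauss \<eta> = E"
      proof -
        have "S_transform gauss \<eta> = exp (bil \<eta> \<eta> / 2)" by (rule S_gauss[OF \<eta> hida_gauss])
        moreover have "bil \<eta> \<eta> = - bil \<xi> \<xi>" unfolding \<eta>_def by (rule bil_i[OF \<xi>])
        ultimately show ?thesis unfolding E_def by simp
      qed
      have "T_transform (cp gauss (cp c d)) \<xi> = E * S_transform (cp gauss (cp c d)) \<eta>"
        unfolding T_transform_eq E_def \<eta>_def ..
      also have "\<dots> = E * (E * (S_transform c \<eta> * S_transform d \<eta>))"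
        using S_cp[OF hida_gauss hcd \<eta>] S_cp[OF hc hd \<eta>] Sg by simp
      also have "\<dots> = (E * S_transform c \<eta>) * (E * S_transform d \<eta>)" by (simp add: mult_ac)
      also have "\<dots> = T_transform c \<xi> * T_transform d \<xi>"
        unfolding T_transform_eq E_def \<eta>_def ..
      finally show "T_transform (cp gauss (cp c d)) \<xi> = T_transform c \<xi> * T_transform d \<xi>" .
    qed
  qed
  fix e assume e: "hida_dist e \<and> (\<forall>\<xi>\<in>Sc. T_transform e \<xi> = T_transform c \<xi> * T_transform d \<xi>)"
  define f where "f = cp gauss (cp c d)"
  have hf: "hida_dist f" unfolding f_def by (rule hida_cp[OF hida_gauss hcd])
  have Tf: "\<forall>\<xi>\<in>Sc. T_transform f \<xi> = T_transform c \<xi> * T_transform d \<xi>"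
    using \<open>hida_dist (cp gauss (cp c d)) \<and> _\<close> unfolding f_def by blast
  have hdiff: "hida_dist (\<lambda>\<alpha>. e \<alpha> - f \<alpha>)" using hida_diff e hf by blast
  have "\<forall>\<eta>\<in>Sc. S_transform (\<lambda>\<alpha>. e \<alpha> - f \<alpha>) \<eta> = 0"
  proof
    fix \<eta> assume \<eta>: "\<eta> \<in> Sc"
    define \<xi> where "\<xi> = (\<lambda>k. - \<i> * \<eta> k)"
    have \<xi>: "\<xi> \<in> Sc" unfolding \<xi>_def by (rule Sc_scale[OF \<eta>])
    have i\<xi>: "(\<lambda>k. \<i> * \<xi> k) = \<eta>" unfolding \<xi>_def by auto
    have "T_transform e \<xi> = T_transform f \<xi>" using e Tf \<xi> by simp
    then have "S_transform e \<eta> = S_transform f \<eta>"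
      unfolding T_transform_eq i\<xi> by simp
    then show "S_transform (\<lambda>\<alpha>. e \<alpha> - f \<alpha>) \<eta> = 0"
      using S_diff[OF _ hf \<eta>] e by simp
  qed
  then have "e \<alpha> - f \<alpha> = 0" for \<alpha> by (rule S_inj[OF hdiff])
  then show "e = cp gauss (cp c d)" unfolding f_def[symmetric] by auto
qed

lemma gauss_nonzero: "gauss \<noteq> (\<lambda>_. 0)"
proof -
  have "(\<lambda>_. 0::nat) \<in> multi_indices" by (simp add: multi_indices_def)
  then have "gauss (\<lambda>_. 0) = 1" by (simp add: gauss_def)
  then show ?thesis by (metis zero_neq_one)
qed

theorem theorem2:
  fixes \<Phi> \<Psi> :: "(nat \<Rightarrow> nat) \<Rightarrow> complex"
  assumes "hida_dist \<Phi>" and "hida_dist \<Psi>"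
  shows "(wick \<Phi> \<Psi> = (\<lambda>_. 0) \<longrightarrow> \<Phi> = (\<lambda>_. 0) \<or> \<Psi> = (\<lambda>_. 0)) \<and>
         (conv \<Phi> \<Psi> = (\<lambda>_. 0) \<longrightarrow> \<Phi> = (\<lambda>_. 0) \<or> \<Psi> = (\<lambda>_. 0))"
proof -
  have z\<Phi>: "\<And>\<alpha>. \<alpha> \<notin> multi_indices \<Longrightarrow> \<Phi> \<alpha> = 0" by (rule hida_distD(1)[OF assms(1)])
  have z\<Psi>: "\<And>\<alpha>. \<alpha> \<notin> multi_indices \<Longrightarrow> \<Psi> \<alpha> = 0" by (rule hida_distD(1)[OF assms(2)])
  have cpz: "\<Phi> = (\<lambda>_. 0) \<or> \<Psi> = (\<lambda>_. 0)" if h: "cp \<Phi> \<Psi> = (\<lambda>_. 0)"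
  proof (rule ccontr)
    assume "\<not> (\<Phi> = (\<lambda>_. 0) \<or> \<Psi> = (\<lambda>_. 0))"
    then have "cp \<Phi> \<Psi> \<noteq> (\<lambda>_. 0)" by (intro cp_nonzero) (use z\<Phi> z\<Psi> in auto)
    with h show False by simp
  qed
  show ?thesis
  proof
    show "wick \<Phi> \<Psi> = (\<lambda>_. 0) \<longrightarrow> \<Phi> = (\<lambda>_. 0) \<or> \<Psi> = (\<lambda>_. 0)"
      using wick_eq[OF assms] cpz by simp
    show "conv \<Phi> \<Psi> = (\<lambda>_. 0) \<longrightarrow> \<Phi> = (\<lambda>_. 0) \<or> \<Psi> = (\<lambda>_. 0)"
    proof
      assume "conv \<Phi> \<Psi> = (\<lambda>_. 0)"
      then have c0: "cp gauss (cp \<Phi> \<Psi>) = (\<lambda>_. 0)" using conv_eq[OF assms] by simp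
      have zg: "\<And>\<alpha>. \<alpha> \<notin> multi_indices \<Longrightarrow> gauss \<alpha> = 0" by (simp add: gauss_def)
      have zc: "\<And>\<alpha>. \<alpha> \<notin> multi_indices \<Longrightarrow> cp \<Phi> \<Psi> \<alpha> = 0" by (simp add: cp_def)
      have "cp \<Phi> \<Psi> = (\<lambda>_. 0)"
      proof (rule ccontr)
        assume cnz: "cp \<Phi> \<Psi> \<noteq> (\<lambda>_. 0)"
        have "cp gauss (cp \<Phi> \<Psi>) \<noteq> (\<lambda>_. 0)"
          by (rule cp_nonzero) (use zg zc gauss_nonzero cnz in auto)
        with c0 show False by simp
      qed
      then show "\<Phi> = (\<lambda>_. 0) \<or> \<Psi> = (\<lambda>_. 0)" by (rule cpz)
    qed
  qed
qed

end
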